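(* Let $W$ be a sunword with at least two proper letters and let $\sigma\prec a\prec b\prec\cdots$ be the linear order it induces on $\Sigma\setminus\{\epsilon\}$. Then $W$ admits a representative $w=\sigma a^{\lambda_1}\epsilon x_{i_2}^{\lambda_2}\epsilon x_{i_3}^{\lambda_3}\cdots\epsilon x_{i_s}^{\lambda_s}$ with $x_{i_2}\neq a$ (and consecutive letters $x_{i_h}\ne x_{i_{h+1}}$) satisfying: (i) $\lambda_1$ and $\lambda_s$ are both odd; (ii) for $h=2,\dots,s-1$, $\lambda_h$ is odd if and only if $x_{i_{h-1}}\neq x_{i_{h+1}}$ (where $x_{i_1}=a$).
   Context: Multisuns: a multisun is a graph with no induced $K_4$ minus an edge, of odd order, whose maximal cliques of size $2$ form a Hamiltonian cycle $C$ (the rim); the other maximal cliques consist of pairwise nonconsecutive vertices of $C$ (inscribed cliques). A sub-multisun deletes the edge sets of some, but not all, inscribed cliques. An $AB$-path (inscribed cliques $A,B$, possibly equal) is a subpath of $C$ with one end in $A$, the other in $B$, internal vertices in no inscribed clique; $A$-path $=AA$-path; for $v\in B$ an $Av$-path is an $AB$-path ending at $v$ in $B$. N-conditions: (N1) every $A$-path has an even number $\ge4$ of vertices; (N2) inscribed cliques have odd size; (N3) all inscribed cliques share a vertex $\xi\in V(C)$ and are otherwise disjoint; (N4) every $A\xi$-path has an even number of vertices; (N5) for $A\ne B$ every $AB$-path has an odd number of vertices. A sunoid is a multisun such that it and all its sub-multisuns satisfy the N-conditions. Words: alphabet $\Sigma$ with distinguished letter $\epsilon$; $x^k$ is $k$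 copies of $x$. The pattern $\pi(w)$ is obtained by repeatedly deleting $\epsilon\epsilon$; $v\sim w$ if related by cyclic shift and/or reversal; $u\approx v$ iff $\pi(u)\sim\pi(v)$; $[w]$ is the class (cyclic word), $w$ a representative. For a multisun satisfying the N-conditions, label rim vertices by $\sigma$ (in $\ge2$ inscribed cliques), a letter specific to $X$ (only in inscribed clique $X$), or $\epsilon$ (in none); reading around the rim gives $w_G$, and $[w_G]$ is its s-word; letters other than $\epsilon,\sigma$ are proper letters. A sunword is the s-word of a sunoid; with at least two proper letters it has the form $[\sigma x_{i_1}^{\lambda_1}\epsilon\cdots\epsilon x_{i_s}^{\lambda_s}]$ with positive exponents and consecutive proper letters distinct. Induced order: take a representative $\sigma u$ equal to its own pattern, replace each interval $xx$ of $u$ ($x$ proper) by $x\epsilon\epsilon x$ to get $z$, let $v=\sigma\epsilon\epsilon z\epsilon\epsilon=v_1\cdots v_N$ arranged cyclically; $\sigma$ is least and for proper $x\ne y$, $x\prec y$ iff the least cyclic distance from position $1$ to a position labeled $x$ is smaller than for $y$. *)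

theory Defs
  imports Main
begin

datatype 'a letter = Eps | Sig | Prop 'a

text \<open>Pattern: normal form under repeated deletion of factors Eps Eps
 (computed by a stack-style reduction; this rewriting is confluent).\<close>
fun pattern :: "'a letter list \<Rightarrow> 'a letter list" where
  "pattern [] = []"
| "pattern (x # xs) =
     (case pattern xs of
        Eps # ys \<Rightarrow> (if x = Eps then ys else x # Eps # ys)
      | ys \<Rightarrow> x # ys)"

definition cyc_rel :: "'b list \<Rightarrow> 'b list \<Rightarrow> bool" where
  "cyc_rel v w \<longleftrightarrow> (\<exists>r. v = rotate r w \<or> v = rev (rotate r w))"

definition approx :: "'a letter list \<Rightarrow> 'a letter list \<Rightarrow> bool" where
  "approx u v \<longleftrightarrow> cyc_rel (pattern u) (pattern v)"

definition cls :: "'a letter list \<Rightarrow> 'a letter list set" where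
  "cls w = {u. approx u w}"

definition clique :: "nat set \<Rightarrow> (nat \<Rightarrow> nat \<Rightarrow> bool) \<Rightarrow> nat set \<Rightarrow> bool" where
  "clique V E K \<longleftrightarrow> K \<subseteq> V \<and> (\<forall>u\<in>K. \<forall>v\<in>K. u \<noteq> v \<longrightarrow> E u v)"

definition maxclique :: "nat set \<Rightarrow> (nat \<Rightarrow> nat \<Rightarrow> bool) \<Rightarrow> nat set \<Rightarrow> bool" where
  "maxclique V E K \<longleftrightarrow> clique V E K \<and> (\<forall>K'. clique V E K' \<and> K \<subseteq> K' \<longrightarrow> K' = K)"

definition simple_graph :: "nat set \<Rightarrow> (nat \<Rightarrow> nat \<Rightarrow> bool) \<Rightarrow> bool" where
  "simple_graph V E \<longleftrightarrow> finite V \<and> (\<forall>u v. E u v \<longrightarrow> u \<in> V \<and> v \<in> V \<and> u \<noteq> v \<and> E v u)"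

definition diamond_free :: "nat set \<Rightarrow> (nat \<Rightarrow> nat \<Rightarrow> bool) \<Rightarrow> bool" where
  "diamond_free V E \<longleftrightarrow> \<not> (\<exists>a\<in>V. \<exists>b\<in>V. \<exists>c\<in>V. \<exists>d\<in>V. distinct [a,b,c,d] \<and>
      E a b \<and> E a c \<and> E a d \<and> E b c \<and> E b d \<and> \<not> E c d)"

definition inscribed :: "nat set \<Rightarrow> (nat \<Rightarrow> nat \<Rightarrow> bool) \<Rightarrow> nat set set" where
  "inscribed V E = {K. maxclique V E K \<and> card K \<noteq> 2}"

text \<open>G is a multisun with rim the Hamiltonian cycle given by the list cyc
 (cyc!i adjacent to cyc!((i+1) mod n)).\<close>
definition multisun_with :: "nat set \<Rightarrow> (nat \<Rightarrow> nat \<Rightarrow> bool) \<Rightarrow> nat list \<Rightarrow> bool" where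
  "multisun_with V E cyc \<longleftrightarrow>
     simple_graph V E \<and> diamond_free V E \<and> odd (card V) \<and>
     distinct cyc \<and> set cyc = V \<and> length cyc \<ge> 3 \<and>
     {K. maxclique V E K \<and> card K = 2} =
       {{cyc ! i, cyc ! ((i + 1) mod length cyc)} | i. i < length cyc} \<and>
     (\<forall>K. maxclique V E K \<and> card K \<noteq> 2 \<longrightarrow>
        (\<forall>i<length cyc. \<forall>j<length cyc. cyc ! i \<in> K \<and> cyc ! j \<in> K \<longrightarrow>
            j \<noteq> (i + 1) mod length cyc))"

definition multisun :: "nat set \<Rightarrow> (nat \<Rightarrow> nat \<Rightarrow> bool) \<Rightarrow> bool" where
  "multisun V E \<longleftrightarrow> (\<exists>cyc. multisun_with V E cyc)"

definition rpos :: "nat list \<Rightarrow> nat \<Rightarrow> nat \<Rightarrow> nat" where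
  "rpos cyc p j = cyc ! ((p + j) mod length cyc)"

text \<open>Subpath of the rim starting at position p with k edges (k+1 vertices),
 whose internal vertices lie in no inscribed clique.\<close>
definition free_path :: "nat set \<Rightarrow> (nat \<Rightarrow> nat \<Rightarrow> bool) \<Rightarrow> nat list \<Rightarrow> nat \<Rightarrow> nat \<Rightarrow> bool" where
  "free_path V E cyc p k \<longleftrightarrow> p < length cyc \<and> 1 \<le> k \<and> k < length cyc \<and>
     (\<forall>j. 0 < j \<and> j < k \<longrightarrow> rpos cyc p j \<notin> \<Union>(inscribed V E))"

definition N_conditions :: "nat set \<Rightarrow> (nat \<Rightarrow> nat \<Rightarrow> bool) \<Rightarrow> nat list \<Rightarrow> bool" where
  "N_conditions V E cyc \<longleftrightarrow> (let I = inscribed V E in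
     \<comment> \<open>N1\<close>
     (\<forall>A\<in>I. \<forall>p k. free_path V E cyc p k \<and> rpos cyc p 0 \<in> A \<and> rpos cyc p k \<in> A
         \<longrightarrow> even (k + 1) \<and> k + 1 \<ge> 4) \<and>
     \<comment> \<open>N2\<close>
     (\<forall>A\<in>I. odd (card A)) \<and>
     (\<exists>\<xi>. \<xi> \<in> set cyc \<and>
       \<comment> \<open>N3\<close>
       (\<forall>A\<in>I. \<xi> \<in> A) \<and> (\<forall>A\<in>I. \<forall>B\<in>I. A \<noteq> B \<longrightarrow> A \<inter> B = {\<xi>}) \<and>
       \<comment> \<open>N4\<close>
       (\<forall>A\<in>I. \<forall>B\<in>I. \<xi> \<in> B \<longrightarrow> (\<forall>p k. free_path V E cyc p k \<and>
          ((rpos cyc p 0 \<in> A \<and> rpos cyc p k = \<xi>) \<or> (rpos cyc p 0 = \<xi> \<and> rpos cyc p k \<in> A))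
          \<longrightarrow> even (k + 1)))) \<and>
     \<comment> \<open>N5\<close>
     (\<forall>A\<in>I. \<forall>B\<in>I. A \<noteq> B \<longrightarrow> (\<forall>p k. free_path V E cyc p k \<and>
          ((rpos cyc p 0 \<in> A - B \<and> rpos cyc p k \<in> B - A) \<or>
           (rpos cyc p 0 \<in> B - A \<and> rpos cyc p k \<in> A - B))
          \<longrightarrow> odd (k + 1))))"

definition satisfies_N :: "nat set \<Rightarrow> (nat \<Rightarrow> nat \<Rightarrow> bool) \<Rightarrow> bool" where
  "satisfies_N V E \<longleftrightarrow> (\<forall>cyc. multisun_with V E cyc \<longrightarrow> N_conditions V E cyc)"

definition del_cliques :: "(nat \<Rightarrow> nat \<Rightarrow> bool) \<Rightarrow> nat set set \<Rightarrow> nat \<Rightarrow> nat \<Rightarrow> bool" where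
  "del_cliques E D u v \<longleftrightarrow> E u v \<and> \<not> (\<exists>K\<in>D. u \<in> K \<and> v \<in> K)"

definition sunoid :: "nat set \<Rightarrow> (nat \<Rightarrow> nat \<Rightarrow> bool) \<Rightarrow> bool" where
  "sunoid V E \<longleftrightarrow> multisun V E \<and> satisfies_N V E \<and>
     (\<forall>D. D \<subseteq> inscribed V E \<and> D \<noteq> {} \<and> D \<noteq> inscribed V E \<longrightarrow>
        satisfies_N V (del_cliques E D))"

definition vlabel :: "nat set \<Rightarrow> (nat \<Rightarrow> nat \<Rightarrow> bool) \<Rightarrow> (nat set \<Rightarrow> 'a) \<Rightarrow> nat \<Rightarrow> 'a letter" where
  "vlabel V E f v =
     (if card {K \<in> inscribed V E. v \<in> K} \<ge> 2 then Sig
      else if (\<exists>K \<in> inscribed V E. v \<in> K)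
           then Prop (f (THE K. K \<in> inscribed V E \<and> v \<in> K))
      else Eps)"

text \<open>Sunword: s-word of a sunoid; the rim is read starting from a vertex
 lying in some inscribed clique.\<close>
definition sunword :: "'a letter list set \<Rightarrow> bool" where
  "sunword W \<longleftrightarrow> (\<exists>V E cyc (f :: nat set \<Rightarrow> 'a) r.
     sunoid V E \<and> multisun_with V E cyc \<and> inj_on f (inscribed V E) \<and>
     r < length cyc \<and> cyc ! r \<in> \<Union>(inscribed V E) \<and>
     W = cls (map (vlabel V E f) (rotate r cyc)))"

fun expand :: "'a letter list \<Rightarrow> 'a letter list" where
  "expand (x # y # r) =
     (if x = y \<and> (\<exists>c. x = Prop c) then x # Eps # Eps # expand (y # r)
      else x # expand (y # r))"
| "expand xs = xs"

definition vword :: "'a letter list \<Rightarrow> 'a letter list" where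
  "vword u = [Sig, Eps, Eps] @ expand u @ [Eps, Eps]"

definition ldist :: "'a letter list \<Rightarrow> 'a letter \<Rightarrow> nat" where
  "ldist v x = Min {min i (length v - i) | i. i < length v \<and> v ! i = x}"

definition induced_least :: "'a letter list set \<Rightarrow> 'a \<Rightarrow> bool" where
  "induced_least W a \<longleftrightarrow> (\<exists>u. Sig # u \<in> W \<and> pattern (Sig # u) = Sig # u \<and>
     Prop a \<in> set u \<and>
     (\<forall>b. Prop b \<in> set u \<and> b \<noteq> a \<longrightarrow> ldist (vword u) (Prop a) < ldist (vword u) (Prop b)))"

definition block_word :: "'a list \<Rightarrow> nat list \<Rightarrow> 'a letter list" where
  "block_word xs ls = Sig # replicate (ls ! 0) (Prop (xs ! 0)) @
     concat (map (\<lambda>h. Eps # replicate (ls ! h) (Prop (xs ! h))) [1..<length xs])"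

end

theory Submission
  imports Defs
begin

definition kept :: "'a set \<Rightarrow> 'a letter \<Rightarrow> bool" where
  "kept S x \<longleftrightarrow> x = Sig \<or> (\<exists>y\<in>S. x = Prop y)"
definition dif :: "'a letter \<Rightarrow> 'a letter \<Rightarrow> bool" where
  "dif x y \<longleftrightarrow> (\<exists>p q. x = Prop p \<and> y = Prop q \<and> p \<noteq> q)"
fun stp :: "'a set \<Rightarrow> 'a letter \<times> bool \<times> bool \<Rightarrow> 'a letter \<Rightarrow> 'a letter \<times> bool \<times> bool" where
  "stp S (l,c,ok) x = (if kept S x then (x, False, ok \<and> c = dif l x) else (l, \<not>c, ok))"
definition pc :: "'a set \<Rightarrow> 'a letter list \<Rightarrow> bool" where
  "pc S u \<longleftrightarrow> (\<forall>i j. i < j \<and> j < length u \<and> kept S (u!i) \<and> kept S (u!j) \<and>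
     (\<forall>k. i<k \<and> k<j \<longrightarrow> \<not> kept S (u!k)) \<longrightarrow> (odd (j-i-1) \<longleftrightarrow> dif (u!i) (u!j)))"

lemma kept_simps[simp]: "kept S Sig" "\<not> kept S Eps" "kept S (Prop y) \<longleftrightarrow> y \<in> S"
  by (auto simp: kept_def)
lemma dif_simps[simp]: "\<not> dif Sig x" "\<not> dif x Sig" "\<not> dif Eps x" "\<not> dif x Eps"
  "dif (Prop p) (Prop q) \<longleftrightarrow> p \<noteq> q"
  by (auto simp: dif_def)
lemma dif_sym: "dif x y = dif y x" by (auto simp: dif_def)

lemma fold_false: "snd (snd (foldl (stp S) (l,c,False) v)) = False"
  by (induction v arbitrary: l c) auto

lemma pc_Cons: "pc S (x#v) \<longleftrightarrow> (kept S x \<longrightarrow> (\<forall>j<length v. kept S (v!j) \<and> (\<forall>k<j. \<not> kept S (v!k)) \<longrightarrow> (odd j \<longleftrightarrow> dif x (v!j)))) \<and> pc S v"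
proof
  assume H: "pc S (x#v)"
  show "(kept S x \<longrightarrow> (\<forall>j<length v. kept S (v!j) \<and> (\<forall>k<j. \<not> kept S (v!k)) \<longrightarrow> (odd j \<longleftrightarrow> dif x (v!j)))) \<and> pc S v"
  proof (intro conjI impI allI)
    fix j assume a: "kept S x" "j < length v" "kept S (v!j) \<and> (\<forall>k<j. \<not> kept S (v!k))"
    have "\<forall>k. 0 < k \<and> k < Suc j \<longrightarrow> \<not> kept S ((x#v)!k)"
      using a(3) by (auto simp: nth_Cons split: nat.splits)
    with a H[unfolded pc_def, rule_format, of 0 "Suc j"] show "odd j \<longleftrightarrow> dif x (v!j)"
      by auto
  next
    show "pc S v" unfolding pc_def
    proof (intro allI impI)
      fix i j assume A: "i < j \<and> j < length v \<and> kept S (v ! i) \<and> kept S (v ! j) \<and> (\<forall>k. i < k \<and> k < j \<longrightarrow> \<not> kept S (v ! k))"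
      have B: "\<forall>k. Suc i < k \<and> k < Suc j \<longrightarrow> \<not> kept S ((x#v) ! k)"
      proof (intro allI impI)
        fix k assume "Suc i < k \<and> k < Suc j" then obtain k' where "k = Suc k'" "i < k'" "k' < j"
          by (cases k) auto
        with A show "\<not> kept S ((x#v) ! k)" by auto
      qed
      from H[unfolded pc_def, rule_format, of "Suc i" "Suc j"] A B
      show "odd (j - i - 1) = dif (v ! i) (v ! j)" by auto
    qed
  qed
next
  assume H: "(kept S x \<longrightarrow> (\<forall>j<length v. kept S (v!j) \<and> (\<forall>k<j. \<not> kept S (v!k)) \<longrightarrow> (odd j \<longleftrightarrow> dif x (v!j)))) \<and> pc S v"
  show "pc S (x#v)" unfolding pc_def
  proof (intro allI impI)
    fix i j assume A: "i < j \<and> j < length (x#v) \<and> kept S ((x#v) ! i) \<and> kept S ((x#v) ! j) \<and> (\<forall>k. i < k \<and> k < j \<longrightarrow> \<not> kept S ((x#v) ! k))"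
    then obtain j' where j': "j = Suc j'" by (cases j) auto
    show "odd (j - i - 1) = dif ((x#v) ! i) ((x#v) ! j)"
    proof (cases i)
      case 0
      have "\<forall>k<j'. \<not> kept S (v!k)"
      proof (intro allI impI)
        fix k assume "k < j'" with A j' 0 show "\<not> kept S (v!k)"
          using A[THEN conjunct2, THEN conjunct2, THEN conjunct2, THEN conjunct2, rule_format, of "Suc k"] by auto
      qed
      with H A j' 0 show ?thesis by auto
    next
      case (Suc i')
      have "\<forall>k. i' < k \<and> k < j' \<longrightarrow> \<not> kept S (v!k)"
      proof (intro allI impI)
        fix k assume "i' < k \<and> k < j'" with A j' Suc show "\<not> kept S (v!k)"
          using A[THEN conjunct2, THEN conjunct2, THEN conjunct2, THEN conjunct2, rule_format, of "Suc k"] by auto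
      qed
      with H A j' Suc show ?thesis unfolding pc_def by auto
    qed
  qed
qed

lemma fold_ok: "snd (snd (foldl (stp S) (l,c,True) v)) \<longleftrightarrow>
   (\<forall>j<length v. kept S (v!j) \<and> (\<forall>k<j. \<not>kept S (v!k)) \<longrightarrow> ((c \<noteq> odd j) \<longleftrightarrow> dif l (v!j))) \<and> pc S v"
proof (induction v arbitrary: l c)
  case Nil then show ?case by (simp add: pc_def)
next
  case (Cons x v)
  show ?case
  proof (cases "kept S x")
    case True
    show ?thesis
    proof (cases "c = dif l x")
      case False
      then show ?thesis using True fold_false[of S x False v]
        by (auto intro!: exI[of _ 0])
    next
      case c: True
      have "snd (snd (foldl (stp S) (l,c,True) (x#v))) = snd (snd (foldl (stp S) (x,False,True) v))"
        using True c by simp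
      also have "\<dots> \<longleftrightarrow> pc S (x#v)" unfolding Cons.IH pc_Cons[of S x v] using True by auto
      finally show ?thesis using True c by (auto simp: less_Suc_eq_0_disj)
    qed
  next
    case False
    have "snd (snd (foldl (stp S) (l,c,True) (x#v))) = snd (snd (foldl (stp S) (l,\<not>c,True) v))"
      using False by simp
    also have "\<dots> \<longleftrightarrow> (\<forall>j<length (x#v). kept S ((x#v)!j) \<and> (\<forall>k<j. \<not>kept S ((x#v)!k)) \<longrightarrow> ((c \<noteq> odd j) \<longleftrightarrow> dif l ((x#v)!j))) \<and> pc S v"
    proof -
      have "(\<forall>j<length v. kept S (v!j) \<and> (\<forall>k<j. \<not>kept S (v!k)) \<longrightarrow> ((\<not>c \<noteq> odd j) \<longleftrightarrow> dif l (v!j)))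
        \<longleftrightarrow> (\<forall>j<length (x#v). kept S ((x#v)!j) \<and> (\<forall>k<j. \<not>kept S ((x#v)!k)) \<longrightarrow> ((c \<noteq> odd j) \<longleftrightarrow> dif l ((x#v)!j)))"
      proof
        assume L: "\<forall>j<length v. kept S (v!j) \<and> (\<forall>k<j. \<not>kept S (v!k)) \<longrightarrow> ((\<not>c \<noteq> odd j) \<longleftrightarrow> dif l (v!j))"
        show "\<forall>j<length (x#v). kept S ((x#v)!j) \<and> (\<forall>k<j. \<not>kept S ((x#v)!k)) \<longrightarrow> ((c \<noteq> odd j) \<longleftrightarrow> dif l ((x#v)!j))"
        proof (intro allI impI)
          fix j assume a: "j < length (x#v)" "kept S ((x#v)!j) \<and> (\<forall>k<j. \<not>kept S ((x#v)!k))"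
          then obtain j' where j': "j = Suc j'" using False by (cases j) auto
          have "\<forall>k<j'. \<not>kept S (v!k)" using a(2) j' by auto
          with L a j' show "(c \<noteq> odd j) \<longleftrightarrow> dif l ((x#v)!j)" by auto
        qed
      next
        assume L: "\<forall>j<length (x#v). kept S ((x#v)!j) \<and> (\<forall>k<j. \<not>kept S ((x#v)!k)) \<longrightarrow> ((c \<noteq> odd j) \<longleftrightarrow> dif l ((x#v)!j))"
        show "\<forall>j<length v. kept S (v!j) \<and> (\<forall>k<j. \<not>kept S (v!k)) \<longrightarrow> ((\<not>c \<noteq> odd j) \<longleftrightarrow> dif l (v!j))"
        proof (intro allI impI)
          fix j assume a: "j < length v" "kept S (v!j) \<and> (\<forall>k<j. \<not>kept S (v!k))"
          have "\<forall>k<Suc j. \<not>kept S ((x#v)!k)" using a(2) False by (auto simp: less_Suc_eq_0_disj)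
          with L[rule_format, of "Suc j"] a show "(\<not>c \<noteq> odd j) \<longleftrightarrow> dif l (v!j)" by auto
        qed
      qed
      then show ?thesis unfolding Cons.IH by blast
    qed
    finally show ?thesis using False pc_Cons[of S x v] by auto
  qed
qed

lemma fold_kept: "kept S x \<Longrightarrow> snd (snd (foldl (stp S) (x,False,True) v)) \<longleftrightarrow> pc S (x#v)"
  unfolding fold_ok pc_Cons[of S x v] by auto

lemma stp_EE: "stp S (stp S st Eps) Eps = st"
  by (cases st) auto

lemma fold_pattern: "foldl (stp S) st (pattern u) = foldl (stp S) st u"
proof (induction u arbitrary: st)
  case Nil then show ?case by simp
next
  case (Cons x xs)
  show ?case
  proof (cases "pattern xs")
    case Nil then show ?thesis using Cons.IH[of "stp S st x"] by simp
  next
    case (Cons y ys)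
    then show ?thesis using Cons.IH[of "stp S st x"] stp_EE[of S st]
      by (cases y; cases x) auto
  qed
qed

lemma pattern_Cons_ne: "x \<noteq> Eps \<Longrightarrow> pattern (x # ys) = x # pattern ys"
proof (cases "pattern ys")
  case (Cons y zs)
  assume "x \<noteq> Eps"
  then show ?thesis using Cons by (cases y) auto
qed simp

lemma pattern_Cons_cases: "pattern (x # ys) = (if x = Eps \<and> pattern ys \<noteq> [] \<and> hd (pattern ys) = Eps then tl (pattern ys) else x # pattern ys)"
proof (cases "pattern ys")
  case (Cons y zs)
  then show ?thesis by (cases y; cases x) auto
qed simp

declare pattern.simps(2)[simp del]

lemma pattern_append: "pattern ys = [] \<or> hd (pattern ys) \<noteq> Eps \<Longrightarrow> pattern (xs @ ys) = pattern xs @ pattern ys"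
proof (induction xs)
  case Nil then show ?case by simp
next
  case (Cons x xs)
  show ?case
  proof (cases "pattern xs = []")
    case True
    then show ?thesis using Cons by (cases "pattern ys") (auto simp: pattern_Cons_cases)
  next
    case False
    then show ?thesis using Cons by (auto simp: pattern_Cons_cases)
  qed
qed

lemma set_pattern: "set (pattern w) - {Eps} = set w - {Eps}"
proof (induction w)
  case Nil then show ?case by simp
next
  case (Cons x xs)
  show ?case
  proof (cases "x = Eps \<and> pattern xs \<noteq> [] \<and> hd (pattern xs) = Eps")
    case True
    then have "set (pattern xs) = insert Eps (set (tl (pattern xs)))"
      by (cases "pattern xs") auto
    then show ?thesis using True Cons.IH by (auto simp: pattern_Cons_cases)
  next
    case False
    then show ?thesis using Cons.IH by (auto simp: pattern_Cons_cases)
  qed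
qed

fun noee :: "'a letter list \<Rightarrow> bool" where
  "noee (Eps # Eps # _) = False"
| "noee (x # xs) = noee xs"
| "noee [] = True"

lemma noee_Cons: "noee (x # xs) \<longleftrightarrow> noee xs \<and> \<not>(x = Eps \<and> xs \<noteq> [] \<and> hd xs = Eps)"
proof (cases xs)
  case (Cons y ys)
  then show ?thesis by (cases x; cases y) auto
qed (cases x; auto)

declare noee.simps(2)[simp del]

lemma noee_pattern: "noee (pattern u)"
proof (induction u)
  case Nil then show ?case by simp
next
  case (Cons x xs)
  show ?case
  proof (cases "x = Eps \<and> pattern xs \<noteq> [] \<and> hd (pattern xs) = Eps")
    case True
    then obtain zs where z: "pattern xs = Eps # zs" by (cases "pattern xs") auto
    then show ?thesis using Cons.IH True by (simp add: pattern_Cons_cases noee_Cons)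
  next
    case False
    then show ?thesis using Cons.IH by (auto simp add: pattern_Cons_cases noee_Cons)
  qed
qed

lemma pattern_noee: "noee u \<Longrightarrow> pattern u = u"
proof (induction u)
  case Nil then show ?case by simp
next
  case (Cons x xs)
  then show ?case by (auto simp: noee_Cons pattern_Cons_cases)
qed

lemma noee_snoc: "noee (xs @ [x]) \<longleftrightarrow> noee xs \<and> \<not>(x = Eps \<and> xs \<noteq> [] \<and> last xs = Eps)"
  by (induction xs) (auto simp: noee_Cons)

lemma noee_rev: "noee (rev u) \<longleftrightarrow> noee u"
  by (induction u) (auto simp: noee_Cons noee_snoc last_rev hd_rev)

lemma pc_rev1: "pc S u \<Longrightarrow> pc S (rev u)"
  unfolding pc_def
proof (intro allI impI)
  fix i j
  assume H: "\<forall>i j. i < j \<and> j < length u \<and> kept S (u ! i) \<and> kept S (u ! j) \<and> (\<forall>k. i < k \<and> k < j \<longrightarrow> \<not> kept S (u ! k)) \<longrightarrow> odd (j - i - 1) = dif (u ! i) (u ! j)"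
    and A: "i < j \<and> j < length (rev u) \<and> kept S (rev u ! i) \<and> kept S (rev u ! j) \<and> (\<forall>k. i < k \<and> k < j \<longrightarrow> \<not> kept S (rev u ! k))"
  define n where "n = length u"
  have ij: "i < j" "j < n" using A n_def by auto
  have r: "\<And>k. k < n \<Longrightarrow> rev u ! k = u ! (n - Suc k)" using n_def by (simp add: rev_nth)
  have k: "\<forall>k. n - Suc j < k \<and> k < n - Suc i \<longrightarrow> \<not> kept S (u ! k)"
  proof (intro allI impI)
    fix k assume k: "n - Suc j < k \<and> k < n - Suc i"
    then have "i < n - Suc k" "n - Suc k < j" "n - Suc (n - Suc k) = k" using ij by auto
    then show "\<not> kept S (u ! k)" using A r[of "n - Suc k"] ij by auto
  qed
  have pre: "n - Suc j < n - Suc i \<and> n - Suc i < length u \<and> kept S (u ! (n - Suc j)) \<and> kept S (u ! (n - Suc i)) \<and> (\<forall>k. n - Suc j < k \<and> k < n - Suc i \<longrightarrow> \<not> kept S (u ! k))"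
    using k A r[of i] r[of j] ij n_def by auto
  have "odd ((n - Suc i) - (n - Suc j) - 1) = dif (u ! (n - Suc j)) (u ! (n - Suc i))"
    using H[rule_format, OF pre] .
  moreover have "(n - Suc i) - (n - Suc j) - 1 = j - i - 1" using ij by auto
  ultimately show "odd (j - i - 1) = dif (rev u ! i) (rev u ! j)"
    using r ij dif_sym by auto
qed

lemma pc_rev: "pc S (rev u) \<longleftrightarrow> pc S u"
  using pc_rev1[of S u] pc_rev1[of S "rev u"] by auto

lemma fold_rep: "y \<notin> S \<Longrightarrow> foldl (stp S) (l,c,ok) (replicate n (Prop y)) = (l, c \<noteq> odd n, ok)"
  by (induction n arbitrary: c) auto

lemma fold_snoc_kept: "kept S x \<Longrightarrow> \<exists>ok. foldl (stp S) st (u @ [x]) = (x, False, ok)"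
  by (cases "foldl (stp S) st u") auto

lemma fold_ok_prefix: "snd (snd (foldl (stp S) st (u @ v))) \<Longrightarrow> snd (snd (foldl (stp S) st u))"
proof (cases "foldl (stp S) st u")
  case (fields a b c)
  assume "snd (snd (foldl (stp S) st (u @ v)))"
  then show ?thesis using fields fold_false[of S a b v] by (cases c) auto
qed

definition br :: "'a list \<Rightarrow> nat list \<Rightarrow> 'a letter list" where
  "br xs ls = concat (map (\<lambda>(x,l). Eps # replicate l (Prop x)) (zip xs ls))"

fun dc :: "'a list \<Rightarrow> bool" where
  "dc (x#y#zs) = (x \<noteq> y \<and> dc (y#zs))"
| "dc _ = True"

lemma br_Nil[simp]: "br [] ls = []" by (simp add: br_def)
lemma br_Cons[simp]: "br (x#xs) (l#ls) = Eps # replicate l (Prop x) @ br xs ls" by (simp add: br_def)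

lemma ok_step: "snd (snd (foldl (stp S) (l,c,True) (x # v))) \<Longrightarrow> kept S x \<Longrightarrow> c = dif l x \<and> snd (snd (foldl (stp S) (x,False,True) v))"
  using fold_false[of S x False v] by (cases "c = dif l x") auto

lemma blk: "\<lbrakk>noee r; r = Prop x # r1; Sig \<notin> set r; \<forall>y. Prop y \<in> set r \<longrightarrow> y \<in> L;
   snd (snd (foldl (stp L) (l,c,True) (r @ [Sig])))\<rbrakk> \<Longrightarrow>
   \<exists>l0 xs ls. r = replicate l0 (Prop x) @ br xs ls \<and> 0 < l0 \<and> length xs = length ls \<and> (\<forall>m\<in>set ls. 0 < m) \<and> dc (x # xs)"
proof (induction "length r" arbitrary: r x r1 l c rule: less_induct)
  case less
  have xL: "x \<in> L" using less.prems by auto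
  have ok1: "snd (snd (foldl (stp L) (Prop x,False,True) (r1 @ [Sig])))"
    using ok_step[of L l c "Prop x" "r1 @ [Sig]"] less.prems xL by auto
  show ?case
  proof (cases r1)
    case Nil
    then show ?thesis using less.prems by (auto intro!: exI[of _ 1] exI[of _ "[]"])
  next
    case (Cons z r2)
    show ?thesis
    proof (cases z)
      case Eps
      show ?thesis
      proof (cases r2)
        case Nil
        then show ?thesis using ok1 Cons Eps by simp
      next
        case (Cons y r3)
        have "y \<noteq> Eps" using less.prems \<open>r1 = z # r2\<close> Eps Cons by (auto simp: noee_Cons)
        moreover have "y \<noteq> Sig" using less.prems \<open>r1 = z # r2\<close> Eps Cons by auto
        ultimately obtain y' where y': "y = Prop y'" by (cases y) auto
        have y'L: "y' \<in> L" using less.prems \<open>r1 = z # r2\<close> Eps Cons y' by auto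
        have ok2: "snd (snd (foldl (stp L) (Prop x,True,True) (r2 @ [Sig])))"
          using ok1 \<open>r1 = z # r2\<close> Eps by simp
        have xy: "x \<noteq> y'" using ok_step[OF ok2[unfolded Cons y' append_Cons]] y'L by auto
        have "\<exists>l0 xs ls. r2 = replicate l0 (Prop y') @ br xs ls \<and> 0 < l0 \<and> length xs = length ls \<and> (\<forall>m\<in>set ls. 0 < m) \<and> dc (y' # xs)"
          apply (rule less.hyps[of r2 y' r3 "Prop x" True])
          using less.prems \<open>r1 = z # r2\<close> Eps Cons y' ok2 by (auto simp: noee_Cons)
        then obtain l0 xs ls where h: "r2 = replicate l0 (Prop y') @ br xs ls" "0 < l0" "length xs = length ls"
          "\<forall>m\<in>set ls. 0 < m" "dc (y' # xs)" by blast
        show ?thesis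
          apply (rule exI[of _ 1], rule exI[of _ "y' # xs"], rule exI[of _ "l0 # ls"])
          using h xy less.prems \<open>r1 = z # r2\<close> Eps by auto
      qed
    next
      case Sig
      then show ?thesis using less.prems Cons by auto
    next
      case (Prop z')
      have z'L: "z' \<in> L" using less.prems Cons Prop by auto
      have "x = z'" using ok_step[OF ok1[unfolded Cons Prop append_Cons]] z'L by auto
      have "\<exists>l0 xs ls. r1 = replicate l0 (Prop x) @ br xs ls \<and> 0 < l0 \<and> length xs = length ls \<and> (\<forall>m\<in>set ls. 0 < m) \<and> dc (x # xs)"
        apply (rule less.hyps[of r1 x r2 "Prop x" False])
        using less.prems Cons Prop \<open>x = z'\<close> ok1 by (auto simp: noee_Cons)
      then obtain l0 xs ls where h: "r1 = replicate l0 (Prop x) @ br xs ls" "0 < l0" "length xs = length ls"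
          "\<forall>m\<in>set ls. 0 < m" "dc (x # xs)" by blast
      show ?thesis
        apply (rule exI[of _ "Suc l0"], rule exI[of _ xs], rule exI[of _ ls])
        using h less.prems by auto
    qed
  qed
qed

lemma par_mid: assumes "snd (snd (foldl (stp S) st (A @ [Prop p] @ Eps # replicate m (Prop q) @ Eps # Prop z # B)))"
  "p \<in> S" "z \<in> S" "q \<notin> S" shows "odd m \<longleftrightarrow> p \<noteq> z"
proof -
  obtain ok1 where o: "foldl (stp S) st (A @ [Prop p]) = (Prop p, False, ok1)"
    using fold_snoc_kept[of S "Prop p" st A] assms by auto
  have "foldl (stp S) st (A @ [Prop p] @ Eps # replicate m (Prop q) @ Eps # Prop z # B)
     = foldl (stp S) (Prop p, False, ok1) (Eps # replicate m (Prop q) @ Eps # Prop z # B)"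
    using o by (metis append_assoc foldl_append)
  also have "\<dots> = foldl (stp S) (foldl (stp S) (Prop p, True, ok1) (replicate m (Prop q))) (Eps # Prop z # B)"
    by simp
  also have "\<dots> = foldl (stp S) (Prop z, False, ok1 \<and> odd m = dif (Prop p) (Prop z)) B"
    using fold_rep[of q S "Prop p" True ok1 m] assms by simp
  finally have "snd (snd (foldl (stp S) (Prop z, False, ok1 \<and> odd m = dif (Prop p) (Prop z)) B))"
    using assms(1) by simp
  then show ?thesis using assms fold_false by (cases "odd m"; cases "p = z") auto
qed

lemma par_end: assumes "snd (snd (foldl (stp S) st (A @ [Prop p] @ Eps # replicate m (Prop q) @ [Sig])))"
  "p \<in> S" "q \<notin> S" shows "odd m"
proof -
  obtain ok1 where o: "foldl (stp S) st (A @ [Prop p]) = (Prop p, False, ok1)"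
    using fold_snoc_kept[of S "Prop p" st A] assms by auto
  have "foldl (stp S) st (A @ [Prop p] @ Eps # replicate m (Prop q) @ [Sig])
     = foldl (stp S) (Prop p, False, ok1) (Eps # replicate m (Prop q) @ [Sig])"
    using o by (metis append_assoc foldl_append)
  also have "\<dots> = foldl (stp S) (foldl (stp S) (Prop p, True, ok1) (replicate m (Prop q))) [Sig]"
    by simp
  also have "\<dots> = (Sig, False, ok1 \<and> (True \<noteq> odd m) = False)"
    using fold_rep[of q S "Prop p" True ok1 m] assms by simp
  finally show ?thesis using assms(1) by auto
qed

lemma par_start: assumes "snd (snd (foldl (stp S) (Sig,False,True) (replicate m (Prop x) @ Eps # Prop y # B)))"
  "y \<in> S" "x \<notin> S" shows "odd m"
proof -
  have "foldl (stp S) (Sig,False,True) (replicate m (Prop x) @ Eps # Prop y # B)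
     = foldl (stp S) (foldl (stp S) (Sig,False,True) (replicate m (Prop x))) (Eps # Prop y # B)"
    by simp
  also have "\<dots> = foldl (stp S) (Prop y, False, \<not>(False \<noteq> odd m) = False) B"
    using fold_rep[of x S Sig False True m] assms by simp
  finally show ?thesis using assms(1) fold_false by (cases "odd m") auto
qed

lemma br_append: "length a = length b \<Longrightarrow> br (a @ c) (b @ d) = br a b @ br c d"
  by (simp add: br_def)

lemma br_snoc: "length a = length b \<Longrightarrow> br (a @ [x]) (b @ [l]) = br a b @ Eps # replicate l (Prop x)"
  by (simp add: br_def)

lemma dec: assumes "length xs = length ls" "\<forall>m\<in>set ls. 0 < m" "0 < l0" "g < length xs"
  shows "\<exists>A. replicate l0 (Prop x) @ br xs ls = A @ [Prop ((x#xs)!g)] @ br (drop g xs) (drop g ls)"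
proof -
  have e: "br xs ls = br (take g xs) (take g ls) @ br (drop g xs) (drop g ls)"
    using br_append[of "take g xs" "take g ls" "drop g xs" "drop g ls"] assms by simp
  have "\<exists>A. replicate l0 (Prop x) @ br (take g xs) (take g ls) = A @ [Prop ((x#xs)!g)]"
  proof (cases g)
    case 0
    then show ?thesis using assms by (cases l0) (auto simp: replicate_append_same[symmetric] simp del: replicate_append_same)
  next
    case (Suc g')
    then have t: "take g xs = take g' xs @ [xs!g']" "take g ls = take g' ls @ [ls!g']"
      using assms by (auto simp: take_Suc_conv_app_nth)
    have "ls!g' > 0" using assms Suc by auto
    then obtain k where k: "ls!g' = Suc k" by (cases "ls!g'") auto
    show ?thesis unfolding t using br_snoc[of "take g' xs" "take g' ls" "xs!g'" "ls!g'"] assms Suc k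
      by (auto simp: replicate_append_same[symmetric] simp del: replicate_append_same)
  qed
  then show ?thesis using e by auto
qed

lemma dc_nth: "dc xs \<longleftrightarrow> (\<forall>h. Suc h < length xs \<longrightarrow> xs!h \<noteq> xs!Suc h)"
proof (induction xs rule: dc.induct)
  case (1 x y zs)
  show ?case
  proof
    assume "dc (x#y#zs)" then show "\<forall>h. Suc h < length (x#y#zs) \<longrightarrow> (x#y#zs)!h \<noteq> (x#y#zs)!Suc h"
      using 1 by (auto simp: nth_Cons split: nat.splits)
  next
    assume H: "\<forall>h. Suc h < length (x#y#zs) \<longrightarrow> (x#y#zs)!h \<noteq> (x#y#zs)!Suc h"
    have "x \<noteq> y" using H[rule_format, of 0] by auto
    moreover have "\<forall>h. Suc h < length (y#zs) \<longrightarrow> (y#zs)!h \<noteq> (y#zs)!Suc h"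
      using H by (metis Suc_less_eq length_Cons nth_Cons_Suc)
    ultimately show "dc (x#y#zs)" using 1 by simp
  qed
qed auto

lemma concat_upt_br: "length xs = length ls \<Longrightarrow>
   concat (map (\<lambda>h. Eps # replicate (ls!h) (Prop (xs!h))) [0..<length xs]) = br xs ls"
proof (induction xs arbitrary: ls)
  case Nil then show ?case by simp
next
  case (Cons x xs)
  then obtain l ls' where "ls = l # ls'" by (cases ls) auto
  then show ?case using Cons
    by (simp add: upt_conv_Cons map_Suc_upt[symmetric] del: upt_Suc) (simp add: comp_def)
qed

lemma bw_eq: "length xs = length ls \<Longrightarrow> block_word (x#xs) (l#ls) = Sig # replicate l (Prop x) @ br xs ls"
  unfolding block_word_def using concat_upt_br[of xs ls]
  by (simp add: map_Suc_upt[symmetric] comp_def del: upt_Suc)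

lemma hd_not_eps: assumes "noee r" "r \<noteq> []" "Sig \<notin> set r" "L \<noteq> {}" "\<forall>y. Prop y \<in> set r \<longrightarrow> y \<in> L"
  "snd (snd (foldl (stp L) (Sig,False,True) (r @ [Sig])))"
  shows "\<exists>x r1. r = Prop x # r1"
proof -
  obtain e r1 where r: "r = e # r1" using assms by (cases r) auto
  show ?thesis
  proof (cases e)
    case Eps
    show ?thesis
    proof (cases r1)
      case Nil then show ?thesis using assms r Eps by simp
    next
      case (Cons y r2)
      have "y \<noteq> Eps" "y \<noteq> Sig" using assms r Eps Cons by (auto simp: noee_Cons)
      then obtain y' where "y = Prop y'" by (cases y) auto
      then show ?thesis using assms r Eps Cons ok_step[of L Sig True "Prop y'" "r2 @ [Sig]"] by auto
    qed
  next
    case Sig then show ?thesis using assms r by auto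
  qed (use r in auto)
qed

lemma set_br: "length xs = length ls \<Longrightarrow> \<forall>m\<in>set ls. 0<m \<Longrightarrow> z \<in> set xs \<Longrightarrow> Prop z \<in> set (br xs ls)"
proof (induction xs arbitrary: ls)
  case (Cons x xs)
  then obtain l ls' where "ls = l # ls'" by (cases ls) auto
  then show ?case using Cons by (cases l) auto
qed simp

lemma core:
  assumes "noee r" "Sig \<notin> set r" "\<forall>y. Prop y \<in> set r \<longrightarrow> y \<in> L"
    "\<forall>S. S \<noteq> {} \<and> S \<subseteq> L \<longrightarrow> snd (snd (foldl (stp S) (Sig,False,True) (r @ [Sig])))"
    "x0 \<noteq> y0" "Prop x0 \<in> set r" "Prop y0 \<in> set r"
  shows "\<exists>xs ls. length xs = length ls \<and> length xs \<ge> 2 \<and> Prop (xs!0) = hd r \<and>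
    (\<forall>h. Suc h < length xs \<longrightarrow> xs ! h \<noteq> xs ! Suc h) \<and>
    (\<forall>h < length ls. ls ! h > 0) \<and>
    block_word xs ls = Sig # r \<and>
    odd (ls ! 0) \<and> odd (last ls) \<and>
    (\<forall>h. 0 < h \<and> Suc h < length xs \<longrightarrow> (odd (ls ! h) \<longleftrightarrow> xs ! (h - 1) \<noteq> xs ! Suc h))"
proof -
  have LL: "L \<noteq> {}" using assms by auto
  have okL: "snd (snd (foldl (stp L) (Sig,False,True) (r @ [Sig])))" using assms(4) LL by auto
  obtain x r1 where r: "r = Prop x # r1"
    using hd_not_eps[OF assms(1) _ assms(2) LL assms(3) okL] assms(6) by (metis empty_iff list.set(1))
  obtain l0 xs ls where b: "r = replicate l0 (Prop x) @ br xs ls" "0 < l0" "length xs = length ls"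
    "\<forall>m\<in>set ls. 0 < m" "dc (x # xs)"
    using blk[OF assms(1) r assms(2) assms(3) okL] by blast
  have xs_ne: "xs \<noteq> []"
  proof
    assume "xs = []"
    then have "set r \<subseteq> {Prop x}" using b by auto
    then show False using assms(5-7) by auto
  qed
  define X where "X = x # xs"
  define Ls where "Ls = l0 # ls"
  have bw: "block_word X Ls = Sig # r" unfolding X_def Ls_def using bw_eq[OF b(3)] b(1) by simp
  have lens: "length X = length Ls" "length X \<ge> 2" using b(3) xs_ne by (auto simp: X_def Ls_def Suc_le_eq)
  have pos: "\<forall>h < length Ls. Ls ! h > 0" using b(2,4) by (auto simp: Ls_def nth_Cons split: nat.splits)
  have dcX: "\<forall>h. Suc h < length X \<longrightarrow> X ! h \<noteq> X ! Suc h" using b(5) dc_nth X_def by blast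
  have inL: "\<And>z. z \<in> set X \<Longrightarrow> z \<in> L"
  proof -
    fix z assume "z \<in> set X"
    then have "Prop z \<in> set r" using b set_br[of xs ls z] unfolding X_def by (cases l0) auto
    then show "z \<in> L" using assms(3) by auto
  qed
  show ?thesis
  proof (intro exI conjI)
    show "length X = length Ls" "length X \<ge> 2" by fact+
    show "Prop (X!0) = hd r" using r X_def by simp
    show "\<forall>h. Suc h < length X \<longrightarrow> X ! h \<noteq> X ! Suc h" by fact
    show "\<forall>h < length Ls. Ls ! h > 0" by fact
    show "block_word X Ls = Sig # r" by fact
    show "odd (Ls ! 0)"
    proof -
      obtain y xs' where xy: "xs = y # xs'" using xs_ne by (cases xs) auto
      obtain m ls' where ml: "ls = m # ls'" using b(3) xy by (cases ls) auto
      obtain m' where m': "m = Suc m'" using b(4) ml by (cases m) auto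
      have "x \<noteq> y" using b(5) xy by simp
      have yL: "y \<in> L" using inL[of y] xy X_def by simp
      have "r @ [Sig] = replicate l0 (Prop x) @ Eps # Prop y # (replicate m' (Prop y) @ br xs' ls' @ [Sig])"
        using b(1) xy ml m' by simp
      then have "snd (snd (foldl (stp {y}) (Sig,False,True) (replicate l0 (Prop x) @ Eps # Prop y # (replicate m' (Prop y) @ br xs' ls' @ [Sig]))))"
        using assms(4)[rule_format, of "{y}"] yL by auto
      from par_start[OF this] \<open>x \<noteq> y\<close> show ?thesis by (simp add: Ls_def)
    qed
    show "odd (last Ls)"
    proof -
      define g where "g = length xs - 1"
      have g: "g < length xs" "Suc g = length xs" using xs_ne g_def by auto
      obtain A where A: "replicate l0 (Prop x) @ br xs ls = A @ [Prop (X!g)] @ br (drop g xs) (drop g ls)"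
        using dec[OF b(3) b(4) b(2) g(1), of x] X_def by auto
      have d: "drop g xs = [last xs]" "drop g ls = [last ls]" using g b(3) xs_ne
      proof -
        have "ls \<noteq> []" using b(3) xs_ne by auto
        then show "drop g xs = [last xs]" "drop g ls = [last ls]" using g b(3) xs_ne
          by (auto simp: last_conv_nth Cons_nth_drop_Suc[symmetric] g_def)
      qed
      have "(x#xs) ! length xs = last xs" using xs_ne by (simp add: last_conv_nth)
      then have "X!g \<noteq> last xs" using dcX[rule_format, of g] g X_def by simp
      moreover have "X!g \<in> L" using inL[OF nth_mem[of g X]] g X_def by simp
      moreover have "r @ [Sig] = A @ [Prop (X!g)] @ Eps # replicate (last ls) (Prop (last xs)) @ [Sig]"
        using A b(1) d by simp
      ultimately have "odd (last ls)"
        using par_end[of "{X!g}" "(Sig,False,True)" A "X!g" "last ls" "last xs"] assms(4)[rule_format, of "{X!g}"]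
        by auto
      then show ?thesis using xs_ne b(3) Ls_def by (cases ls) auto
    qed
    show "\<forall>h. 0 < h \<and> Suc h < length X \<longrightarrow> (odd (Ls ! h) \<longleftrightarrow> X ! (h - 1) \<noteq> X ! Suc h)"
    proof (intro allI impI)
      fix h assume h: "0 < h \<and> Suc h < length X"
      define g where "g = h - 1"
      have g: "g < length xs" "Suc g < length xs" "h = Suc g" using h g_def X_def by auto
      obtain A where A: "replicate l0 (Prop x) @ br xs ls = A @ [Prop (X!g)] @ br (drop g xs) (drop g ls)"
        using dec[OF b(3) b(4) b(2) g(1), of x] X_def by auto
      have d: "drop g xs = xs!g # xs!Suc g # drop (Suc (Suc g)) xs" "drop g ls = ls!g # ls!Suc g # drop (Suc (Suc g)) ls"
        using g b(3) by (auto simp: Cons_nth_drop_Suc)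
      obtain k where k: "ls!Suc g = Suc k" using b(4) g b(3) nth_mem[of "Suc g" ls] by (cases "ls!Suc g") auto
      have e: "r @ [Sig] = A @ [Prop (X!g)] @ Eps # replicate (ls!g) (Prop (xs!g)) @ Eps # Prop (xs!Suc g) #
          (replicate k (Prop (xs!Suc g)) @ br (drop (Suc (Suc g)) xs) (drop (Suc (Suc g)) ls) @ [Sig])"
        using A b(1) d k by simp
      have n: "X!g \<noteq> xs!g" "xs!g \<noteq> xs!Suc g" using dcX[rule_format, of g] dcX[rule_format, of "Suc g"] g X_def by auto
      have iL: "X!g \<in> L" "xs!Suc g \<in> L" using inL[OF nth_mem[of g X]] inL[OF nth_mem[of "Suc (Suc g)" X]] g X_def by auto
      have ok: "snd (snd (foldl (stp {X!g, xs!Suc g}) (Sig,False,True) (r @ [Sig])))"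
        using assms(4)[rule_format, of "{X!g, xs!Suc g}"] iL by auto
      have "odd (ls!g) \<longleftrightarrow> X!g \<noteq> xs!Suc g"
        by (rule par_mid[OF ok[unfolded e]]) (use n in auto)
      then show "odd (Ls ! h) \<longleftrightarrow> X ! (h - 1) \<noteq> X ! Suc h" using g X_def Ls_def by simp
    qed
  qed
qed

lemma clique_ext: "finite V \<Longrightarrow> clique V E M \<Longrightarrow> \<exists>M0. maxclique V E M0 \<and> M \<subseteq> M0"
proof -
  assume f: "finite V" and c: "clique V E M"
  have "{K. clique V E K} \<subseteq> Pow V" by (auto simp: clique_def)
  then have "finite {K. clique V E K}" using f by (meson finite_Pow_iff finite_subset)
  from finite_has_maximal2[OF this, of M] c obtain m where
    "clique V E m" "M \<subseteq> m" "\<forall>b. clique V E b \<longrightarrow> m \<subseteq> b \<longrightarrow> m = b" by auto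
  then show ?thesis by (auto simp: maxclique_def)
qed

lemma sub_ms:
  assumes ms: "multisun_with V E cyc"
    and I3: "\<forall>A\<in>inscribed V E. \<forall>B\<in>inscribed V E. A \<noteq> B \<longrightarrow> A \<inter> B = {\<xi>}"
    and D: "D \<subseteq> inscribed V E"
  shows "multisun_with V (del_cliques E D) cyc \<and> inscribed V (del_cliques E D) = inscribed V E - D"
proof -
  define n where "n = length cyc"
  define E' where "E' = del_cliques E D"
  have sg: "simple_graph V E" and df: "diamond_free V E" and oc: "odd (card V)" and dcyc: "distinct cyc"
    and sc: "set cyc = V" and n3: "n \<ge> 3"
    and rimeq: "{K. maxclique V E K \<and> card K = 2} = {{cyc ! i, cyc ! ((i + 1) mod n)} | i. i < n}"
    and nc: "\<forall>K. maxclique V E K \<and> card K \<noteq> 2 \<longrightarrow>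
        (\<forall>i<n. \<forall>j<n. cyc ! i \<in> K \<and> cyc ! j \<in> K \<longrightarrow> j \<noteq> (i + 1) mod n)"
    using ms unfolding multisun_with_def n_def by auto
  have fV: "finite V" using sg simple_graph_def by auto
  have E'E: "\<And>u v. E' u v \<Longrightarrow> E u v" unfolding E'_def del_cliques_def by auto
  have cE: "\<And>K. clique V E' K \<Longrightarrow> clique V E K" using E'E unfolding clique_def by auto
  have inI: "\<And>K. maxclique V E K \<Longrightarrow> card K \<noteq> 2 \<Longrightarrow> K \<in> inscribed V E" by (auto simp: inscribed_def)
  have rimE: "\<And>i. i < n \<Longrightarrow> maxclique V E {cyc ! i, cyc ! ((i + 1) mod n)} \<and> card {cyc ! i, cyc ! ((i + 1) mod n)} = 2"
  proof -
    fix i assume "i < n"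
    then have "{cyc ! i, cyc ! ((i + 1) mod n)} \<in> {{cyc ! i, cyc ! ((i + 1) mod n)} | i. i < n}" by auto
    then show "maxclique V E {cyc ! i, cyc ! ((i + 1) mod n)} \<and> card {cyc ! i, cyc ! ((i + 1) mod n)} = 2"
      using rimeq by blast
  qed
  have rimD: "\<And>i K. i < n \<Longrightarrow> K \<in> D \<Longrightarrow> \<not> (cyc ! i \<in> K \<and> cyc ! ((i + 1) mod n) \<in> K)"
  proof
    fix i K assume i: "i < n" and K: "K \<in> D" and h: "cyc ! i \<in> K \<and> cyc ! ((i + 1) mod n) \<in> K"
    have "maxclique V E K" "card K \<noteq> 2" using K D by (auto simp: inscribed_def)
    then show False using nc i h n3 by (metis mod_less_divisor not_numeral_le_zero neq0_conv)
  qed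
  have rimc: "\<And>i. i < n \<Longrightarrow> clique V E' {cyc ! i, cyc ! ((i + 1) mod n)}"
  proof -
    fix i assume i: "i < n"
    have "clique V E {cyc ! i, cyc ! ((i + 1) mod n)}" using rimE[OF i] by (simp add: maxclique_def)
    then show "clique V E' {cyc ! i, cyc ! ((i + 1) mod n)}"
      using rimD[OF i] unfolding clique_def E'_def del_cliques_def by auto
  qed
  have keep: "\<And>K. K \<in> inscribed V E - D \<Longrightarrow> clique V E' K"
  proof -
    fix K assume K: "K \<in> inscribed V E - D"
    then have cK: "clique V E K" by (auto simp: inscribed_def maxclique_def)
    show "clique V E' K" unfolding clique_def
    proof (intro conjI ballI impI)
      show "K \<subseteq> V" using cK clique_def by auto
    next
      fix u v assume u: "u \<in> K" "v \<in> K" "u \<noteq> v"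
      have "\<not> (\<exists>K'\<in>D. u \<in> K' \<and> v \<in> K')"
      proof
        assume "\<exists>K'\<in>D. u \<in> K' \<and> v \<in> K'"
        then obtain K' where "K' \<in> D" "u \<in> K'" "v \<in> K'" by auto
        then have "K' \<noteq> K" "K' \<in> inscribed V E" using K D by auto
        then have "K \<inter> K' = {\<xi>}" using I3 K by auto
        then show False using u \<open>u \<in> K'\<close> \<open>v \<in> K'\<close> by (metis IntI singletonD)
      qed
      then show "E' u v" using cK u unfolding clique_def E'_def del_cliques_def by auto
    qed
  qed
  have card2: "\<And>M. maxclique V E' M \<Longrightarrow> 2 \<le> card M"
  proof (rule ccontr)
    fix M assume M: "maxclique V E' M" "\<not> 2 \<le> card M"
    have MV: "M \<subseteq> V" using M by (auto simp: maxclique_def clique_def)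
    then have fM: "finite M" using fV finite_subset by auto
    obtain v where v: "v \<in> V" "M \<subseteq> {v}"
    proof (cases "M = {}")
      case True
      have "0 < length cyc" using n3 unfolding n_def by linarith
      then have "cyc ! 0 \<in> V" using sc nth_mem[of 0 cyc] by auto
      then show ?thesis using that[of "cyc ! 0"] True by auto
    next
      case False
      then obtain v where "v \<in> M" by auto
      moreover have "card M \<noteq> 0" using False fM by simp
      then have "card M = 1" using M(2) by linarith
      ultimately show ?thesis using that[of v] MV by (metis card_1_singletonE singletonD subset_eq)
    qed
    obtain i where i: "i < n" "cyc ! i = v" using v sc by (auto simp: in_set_conv_nth n_def)
    have "M \<subseteq> {cyc ! i, cyc ! ((i + 1) mod n)}" using v i by auto
    then have "M = {cyc ! i, cyc ! ((i + 1) mod n)}" using M(1) rimc[OF i(1)] unfolding maxclique_def by auto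
    then show False using rimE[OF i(1)] M(2) by auto
  qed
  have maxiff: "\<And>M. maxclique V E' M \<longleftrightarrow> maxclique V E M \<and> M \<notin> D"
  proof
    fix M assume M: "maxclique V E' M"
    have cM: "clique V E M" using M cE by (auto simp: maxclique_def)
    obtain M0 where M0: "maxclique V E M0" "M \<subseteq> M0" using clique_ext[OF fV cM] by auto
    have M0D: "M0 \<notin> D"
    proof
      assume "M0 \<in> D"
      have "2 \<le> card M" using card2 M by auto
      then obtain u v where "u \<in> M" "v \<in> M" "u \<noteq> v"
        by (metis card_le_Suc0_iff_eq not_less_eq_eq numeral_2_eq_2 card.infinite zero_le)
      then have "E' u v" using M by (auto simp: maxclique_def clique_def)
      then show False using \<open>M0 \<in> D\<close> \<open>u \<in> M\<close> \<open>v \<in> M\<close> M0 unfolding E'_def del_cliques_def by auto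
    qed
    have "clique V E' M0"
    proof (cases "card M0 = 2")
      case True
      then obtain i where "i < n" "M0 = {cyc ! i, cyc ! ((i + 1) mod n)}" using rimeq M0 by blast
      then show ?thesis using rimc by auto
    next
      case False
      then show ?thesis using keep inI M0 M0D by auto
    qed
    then have "M = M0" using M M0 by (auto simp: maxclique_def)
    then show "maxclique V E M \<and> M \<notin> D" using M0 M0D by auto
  next
    fix M assume M: "maxclique V E M \<and> M \<notin> D"
    have "clique V E' M"
    proof (cases "card M = 2")
      case True
      then obtain i where "i < n" "M = {cyc ! i, cyc ! ((i + 1) mod n)}" using rimeq M by blast
      then show ?thesis using rimc by auto
    next
      case False
      then show ?thesis using keep inI M by auto
    qed
    then show "maxclique V E' M" using M cE by (auto simp: maxclique_def)
  qed
  have insc: "inscribed V E' = inscribed V E - D" unfolding inscribed_def maxiff by auto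
  have sg': "simple_graph V E'"
    using sg unfolding simple_graph_def E'_def del_cliques_def by auto
  have df': "diamond_free V E'"
    unfolding diamond_free_def
  proof
    assume "\<exists>a\<in>V. \<exists>b\<in>V. \<exists>c\<in>V. \<exists>d\<in>V. distinct [a,b,c,d] \<and>
      E' a b \<and> E' a c \<and> E' a d \<and> E' b c \<and> E' b d \<and> \<not> E' c d"
    then obtain a b c d where abcd: "a\<in>V" "b\<in>V" "c\<in>V" "d\<in>V" "distinct [a,b,c,d]"
      "E' a b" "E' a c" "E' a d" "E' b c" "E' b d" "\<not> E' c d" by blast
    show False
    proof (cases "E c d")
      case False
      then show False using df abcd E'E unfolding diamond_free_def by blast
    next
      case True
      then obtain K where K: "K \<in> D" "c \<in> K" "d \<in> K" using abcd unfolding E'_def del_cliques_def by auto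
      have sym: "\<And>u v. E u v \<Longrightarrow> E v u" using sg simple_graph_def by auto
      have "clique V E {a,b,c,d}" unfolding clique_def
        using abcd E'E sym True by auto
      then obtain M0 where M0: "maxclique V E M0" "{a,b,c,d} \<subseteq> M0" using clique_ext fV by blast
      have fM0: "finite M0" using M0 fV by (meson clique_def finite_subset maxclique_def)
      have "card {a,b,c,d} = 4" using abcd by auto
      then have "card M0 \<ge> 4" using card_mono[OF fM0 M0(2)] by auto
      then have "M0 \<in> inscribed V E" using inI M0 by auto
      moreover have "K \<in> inscribed V E" using K D by auto
      ultimately have "M0 = K" using I3 K M0 abcd by (metis IntI insert_subset singletonD distinct_length_2_or_more)
      then show False using abcd K M0 unfolding E'_def del_cliques_def by auto
    qed
  qed
  have ms': "multisun_with V E' cyc"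
    unfolding multisun_with_def
  proof (intro conjI)
    show "{K. maxclique V E' K \<and> card K = 2} = {{cyc ! i, cyc ! ((i + 1) mod length cyc)} | i. i < length cyc}"
      using rimeq maxiff D by (auto simp: n_def inscribed_def)
    show "\<forall>K. maxclique V E' K \<and> card K \<noteq> 2 \<longrightarrow>
        (\<forall>i<length cyc. \<forall>j<length cyc. cyc ! i \<in> K \<and> cyc ! j \<in> K \<longrightarrow> j \<noteq> (i + 1) mod length cyc)"
      using nc maxiff by (auto simp: n_def)
  qed (use sg' df' oc dcyc sc n3 n_def in auto)
  show ?thesis using ms' insc E'_def by auto
qed

lemma fin_insc: "finite V \<Longrightarrow> finite (inscribed V E)"
proof -
  assume "finite V"
  moreover have "inscribed V E \<subseteq> Pow V" by (auto simp: inscribed_def maxclique_def clique_def)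
  ultimately show ?thesis by (meson finite_Pow_iff finite_subset)
qed

lemma vlabel_none: assumes "v \<notin> \<Union>(inscribed V E)" shows "vlabel V E f v = Eps"
proof -
  have e: "{K \<in> inscribed V E. v \<in> K} = {}" using assms by auto
  have n: "\<not> (\<exists>K\<in>inscribed V E. v \<in> K)" using assms by auto
  have "\<not> card {K \<in> inscribed V E. v \<in> K} \<ge> 2" unfolding e by simp
  then show ?thesis unfolding vlabel_def using n by (simp only: if_False)
qed

lemma vlabel_unique: assumes "finite (inscribed V E)" "K \<in> inscribed V E" "v \<in> K"
  "\<forall>K'\<in>inscribed V E. v \<in> K' \<longrightarrow> K' = K" shows "vlabel V E f v = Prop (f K)"
proof -
  have s: "{K'\<in>inscribed V E. v \<in> K'} = {K}" using assms by blast
  have t: "(THE K'. K' \<in> inscribed V E \<and> v \<in> K') = K" using assms by (intro the_equality) blast+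
  have c: "\<not> card {K'\<in>inscribed V E. v \<in> K'} \<ge> 2" unfolding s by simp
  have ex: "\<exists>K \<in> inscribed V E. v \<in> K" using assms by auto
  show ?thesis unfolding vlabel_def using c ex t by (simp only: if_False if_True)
qed

lemma vlabel_two: assumes "finite (inscribed V E)" "A \<in> inscribed V E" "B \<in> inscribed V E" "A \<noteq> B" "v \<in> A" "v \<in> B"
  shows "vlabel V E f v = Sig"
proof -
  have "{A, B} \<subseteq> {K \<in> inscribed V E. v \<in> K}" using assms by auto
  then have "card {A,B} \<le> card {K \<in> inscribed V E. v \<in> K}" using assms(1) by (intro card_mono) auto
  then have c: "card {K \<in> inscribed V E. v \<in> K} \<ge> 2" using assms(4) by simp
  show ?thesis unfolding vlabel_def using c by (simp only: if_True)
qed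

lemma vlabel_Prop: assumes "finite (inscribed V E)" "vlabel V E f v = Prop x"
  shows "\<exists>K\<in>inscribed V E. v \<in> K \<and> x = f K"
proof -
  have c: "\<not> card {K \<in> inscribed V E. v \<in> K} \<ge> 2"
  proof
    assume "card {K \<in> inscribed V E. v \<in> K} \<ge> 2"
    then have "vlabel V E f v = Sig" unfolding vlabel_def by (simp only: if_True)
    then show False using assms by simp
  qed
  have ex: "\<exists>K \<in> inscribed V E. v \<in> K"
  proof (rule ccontr)
    assume "\<not> (\<exists>K \<in> inscribed V E. v \<in> K)"
    then have "vlabel V E f v = Eps" using c unfolding vlabel_def by (simp only: if_False)
    then show False using assms by simp
  qed
  have x: "vlabel V E f v = Prop (f (THE K. K \<in> inscribed V E \<and> v \<in> K))"
    unfolding vlabel_def using c ex by (simp only: if_False if_True)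
  obtain K where K: "K \<in> inscribed V E" "v \<in> K" using ex by auto
  have u: "\<forall>K'\<in>inscribed V E. v \<in> K' \<longrightarrow> K' = K"
  proof (intro ballI impI, rule ccontr)
    fix K' assume "K' \<in> inscribed V E" "v \<in> K'" "K' \<noteq> K"
    then have "{K, K'} \<subseteq> {K \<in> inscribed V E. v \<in> K}" using K by auto
    then have "card {K,K'} \<le> card {K \<in> inscribed V E. v \<in> K}" using assms(1) by (intro card_mono) auto
    then show False using c \<open>K' \<noteq> K\<close> by auto
  qed
  have "(THE K'. K' \<in> inscribed V E \<and> v \<in> K') = K" using K u by (intro the_equality) blast+
  then show ?thesis using K x assms(2) by (metis letter.inject)
qed

lemma vlabel_Sig: assumes "vlabel V E f v = Sig"
  shows "card {K \<in> inscribed V E. v \<in> K} \<ge> 2"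
proof (rule ccontr)
  assume c: "\<not> card {K \<in> inscribed V E. v \<in> K} \<ge> 2"
  show False
  proof (cases "\<exists>K \<in> inscribed V E. v \<in> K")
    case True
    then have "vlabel V E f v = Prop (f (THE K. K \<in> inscribed V E \<and> v \<in> K))"
      unfolding vlabel_def using c by (simp only: if_False if_True)
    then show False using assms by simp
  next
    case False
    then have "vlabel V E f v = Eps" unfolding vlabel_def using c by (simp only: if_False if_True)
    then show False using assms by simp
  qed
qed

lemma rpos_shift: "0 < length cyc \<Longrightarrow> rpos cyc ((p0 + i) mod length cyc) m = rpos cyc p0 (i + m)"
  unfolding rpos_def by (simp add: mod_add_left_eq add.assoc)

lemma rpos_xi: assumes "distinct cyc" "p0 < length cyc" "i \<le> length cyc" "rpos cyc p0 i = cyc ! p0"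
  shows "i = 0 \<or> i = length cyc"
proof -
  have l: "(p0 + i) mod length cyc < length cyc" using assms(2) by (intro mod_less_divisor) linarith
  have e: "(p0 + i) mod length cyc = p0"
    using assms(4) nth_eq_iff_index_eq[OF assms(1) l assms(2)] unfolding rpos_def by simp
  show ?thesis
  proof (cases "p0 + i < length cyc")
    case True
    then show ?thesis using e by simp
  next
    case False
    then have "(p0 + i) mod length cyc = p0 + i - length cyc" using assms(2,3)
      by (simp add: le_mod_geq)
    then show ?thesis using e False assms by linarith
  qed
qed

lemma gp:
  assumes ms: "multisun_with V E cyc"
    and sN: "\<forall>D. D \<subseteq> inscribed V E \<and> D \<noteq> {} \<and> D \<noteq> inscribed V E \<longrightarrow> satisfies_N V (del_cliques E D)"
    and sN0: "satisfies_N V E"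
    and xi: "\<forall>A\<in>inscribed V E. \<xi> \<in> A" "\<forall>A\<in>inscribed V E. \<forall>B\<in>inscribed V E. A \<noteq> B \<longrightarrow> A \<inter> B = {\<xi>}"
    and inj: "inj_on f (inscribed V E)"
    and cI: "A0 \<in> inscribed V E" "B0 \<in> inscribed V E" "A0 \<noteq> B0"
    and p0: "p0 < length cyc" "cyc ! p0 = \<xi>"
    and K: "Kset \<subseteq> inscribed V E" "Kset \<noteq> {}"
  shows "pc (f ` Kset) (map (\<lambda>j. vlabel V E f (rpos cyc p0 j)) [0..<Suc (length cyc)])"
proof -
  define I where "I = inscribed V E"
  define n where "n = length cyc"
  define lab where "lab = vlabel V E f"
  define E' where "E' = del_cliques E (I - Kset)"
  define S where "S = f ` Kset"
  have sg: "simple_graph V E" and oc: "odd (card V)" and dcyc: "distinct cyc"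
    and sc: "set cyc = V" and n3: "n \<ge> 3"
    using ms unfolding multisun_with_def n_def by auto
  have n0: "0 < n" using n3 by linarith
  have fV: "finite V" using sg simple_graph_def by auto
  have fI: "finite I" using fin_insc[OF fV] I_def by simp
  have oddn: "odd n" using oc dcyc sc distinct_card n_def by metis
  have sub: "multisun_with V E' cyc \<and> inscribed V E' = I - (I - Kset)"
    using sub_ms[OF ms xi(2), of "I - Kset"] unfolding I_def E'_def by auto
  have insc': "inscribed V E' = Kset" using sub K I_def by auto
  have NC: "N_conditions V E' cyc"
  proof (cases "Kset = I")
    case True
    then have "E' = E" unfolding E'_def del_cliques_def by (auto intro!: ext)
    then show ?thesis using sN0 ms satisfies_N_def by auto
  next
    case False
    then have "satisfies_N V E'" using sN K unfolding E'_def I_def by auto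
    then show ?thesis using sub satisfies_N_def by auto
  qed
  have N1: "\<forall>A\<in>Kset. \<forall>p k. free_path V E' cyc p k \<and> rpos cyc p 0 \<in> A \<and> rpos cyc p k \<in> A \<longrightarrow> even (k + 1)"
    using NC insc' unfolding N_conditions_def Let_def by auto
  have N5: "\<forall>A\<in>Kset. \<forall>B\<in>Kset. A \<noteq> B \<longrightarrow> (\<forall>p k. free_path V E' cyc p k \<and>
          ((rpos cyc p 0 \<in> A - B \<and> rpos cyc p k \<in> B - A) \<or> (rpos cyc p 0 \<in> B - A \<and> rpos cyc p k \<in> A - B))
          \<longrightarrow> odd (k + 1))"
    using NC insc' unfolding N_conditions_def Let_def by auto
  have labxi: "lab \<xi> = Sig" using vlabel_two[OF fI[unfolded I_def] cI] xi(1) cI unfolding lab_def by auto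
  have labK: "\<And>v K. K \<in> I \<Longrightarrow> v \<in> K \<Longrightarrow> v \<noteq> \<xi> \<Longrightarrow> lab v = Prop (f K)"
  proof -
    fix v K assume a: "K \<in> I" "v \<in> K" "v \<noteq> \<xi>"
    have "\<forall>K'\<in>I. v \<in> K' \<longrightarrow> K' = K"
    proof (intro ballI impI, rule ccontr)
      fix K' assume "K' \<in> I" "v \<in> K'" "K' \<noteq> K"
      then have "K \<inter> K' = {\<xi>}" using xi(2) a I_def by auto
      then show False using a \<open>v \<in> K'\<close> by blast
    qed
    then show "lab v = Prop (f K)" using vlabel_unique[of V E K v f] fI a unfolding I_def lab_def by blast
  qed
  have keptiff: "\<And>v. kept S (lab v) \<longleftrightarrow> v \<in> \<Union>Kset"
  proof -
    fix v
    show "kept S (lab v) \<longleftrightarrow> v \<in> \<Union>Kset"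
    proof (cases "v = \<xi>")
      case True
      then show ?thesis using labxi K xi(1) I_def by auto
    next
      case False
      show ?thesis
      proof (cases "v \<in> \<Union>I")
        case True
        then obtain K0 where K0: "K0 \<in> I" "v \<in> K0" by auto
        have "lab v = Prop (f K0)" using labK K0 False by auto
        moreover have "f K0 \<in> S \<longleftrightarrow> K0 \<in> Kset" using inj K K0 unfolding S_def I_def
          by (meson image_eqI inj_on_image_mem_iff)
        moreover have "v \<in> \<Union>Kset \<longleftrightarrow> K0 \<in> Kset"
        proof
          assume "v \<in> \<Union>Kset"
          then obtain K1 where "K1 \<in> Kset" "v \<in> K1" by auto
          moreover have "K1 = K0"
          proof (rule ccontr)
            assume "K1 \<noteq> K0"
            then have "K1 \<inter> K0 = {\<xi>}" using xi(2) K0 \<open>K1 \<in> Kset\<close> K I_def by auto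
            then show False using \<open>v \<in> K1\<close> K0 False by blast
          qed
          ultimately show "K0 \<in> Kset" by simp
        qed (use K0 in auto)
        ultimately show ?thesis by simp
      next
        case nI: False
        then have "lab v = Eps" using vlabel_none[of v V E f] unfolding lab_def I_def by auto
        then show ?thesis using nI K I_def by auto
      qed
    qed
  qed
  define wx where "wx = map (\<lambda>j. lab (rpos cyc p0 j)) [0..<Suc n]"
  have wxn: "\<And>k. k < Suc n \<Longrightarrow> wx ! k = lab (rpos cyc p0 k)" unfolding wx_def
    by (simp del: upt_Suc)
  have rp0: "rpos cyc p0 0 = \<xi>" "rpos cyc p0 n = \<xi>" using p0 unfolding rpos_def n_def by auto
  have "pc S wx" unfolding pc_def
  proof (intro allI impI)
    fix i j assume A: "i < j \<and> j < length wx \<and> kept S (wx ! i) \<and> kept S (wx ! j) \<and> (\<forall>k. i < k \<and> k < j \<longrightarrow> \<not> kept S (wx ! k))"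
    have ij: "i < j" "j \<le> n" using A wx_def by auto
    show "odd (j - i - 1) = dif (wx ! i) (wx ! j)"
    proof (cases "i = 0 \<and> j = n")
      case True
      then show ?thesis using wxn rp0 labxi oddn by auto
    next
      case nb: False
      define k where "k = j - i"
      define p where "p = (p0 + i) mod n"
      have k: "1 \<le> k" "k < n" using ij nb k_def by auto
      have rp: "\<And>m. rpos cyc p m = rpos cyc p0 (i + m)" using rpos_shift[of cyc p0 i] n0 p_def n_def by auto
      have xin: "rpos cyc p0 i \<in> \<Union>Kset" "rpos cyc p0 j \<in> \<Union>Kset"
        using A keptiff wxn ij by auto
      have fp: "free_path V E' cyc p k" unfolding free_path_def insc'
      proof (intro conjI allI impI)
        show "p < length cyc" using p_def n0 n_def by auto
        show "1 \<le> k" "k < length cyc" using k n_def by auto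
      next
        fix m assume "0 < m \<and> m < k"
        then have "i < i + m" "i + m < j" using k_def ij by auto
        then have "\<not> kept S (wx ! (i + m))" using A by auto
        then show "rpos cyc p m \<notin> \<Union>Kset" using keptiff wxn rp ij \<open>i + m < j\<close> by auto
      qed
      have ends: "rpos cyc p 0 = rpos cyc p0 i" "rpos cyc p k = rpos cyc p0 j" using rp k_def ij by auto
      have nxi: "\<not> (rpos cyc p0 i = \<xi> \<and> rpos cyc p0 j = \<xi>)"
      proof
        assume h: "rpos cyc p0 i = \<xi> \<and> rpos cyc p0 j = \<xi>"
        have "i = 0 \<or> i = n" "j = 0 \<or> j = n"
          using rpos_xi[OF dcyc p0(1), of i] rpos_xi[OF dcyc p0(1), of j] h p0 ij n_def by auto
        then show False using nb ij by auto
      qed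
      have "(even k \<longleftrightarrow> dif (wx ! i) (wx ! j))"
      proof (cases "rpos cyc p0 i = \<xi>")
        case True
        obtain B where B: "B \<in> Kset" "rpos cyc p0 j \<in> B" using xin by auto
        have "\<xi> \<in> B" using xi(1) B K by auto
        have "even (k+1)" using N1[rule_format, of B p k] B fp ends True \<open>\<xi> \<in> B\<close> by simp
        moreover have "wx ! i = Sig" using wxn True labxi ij by auto
        ultimately show ?thesis by auto
      next
        case False
        obtain A where Ai: "A \<in> Kset" "rpos cyc p0 i \<in> A" using xin by auto
        show ?thesis
        proof (cases "rpos cyc p0 j = \<xi>")
          case True
          have "\<xi> \<in> A" using xi(1) Ai K by auto
          have "even (k+1)" using N1[rule_format, of A p k] Ai fp ends True \<open>\<xi> \<in> A\<close> by simp
          moreover have "wx ! j = Sig" using wxn True labxi ij by auto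
          ultimately show ?thesis by auto
        next
          case Fj: False
          obtain B where B: "B \<in> Kset" "rpos cyc p0 j \<in> B" using xin by auto
          have li: "wx ! i = Prop (f A)" using labK[of A "rpos cyc p0 i"] Ai K False wxn ij I_def by auto
          have lj: "wx ! j = Prop (f B)" using labK[of B "rpos cyc p0 j"] B K Fj wxn ij I_def by auto
          show ?thesis
          proof (cases "A = B")
            case True
            have "even (k+1)" using N1[rule_format, of A p k] Ai B fp ends True by simp
            then show ?thesis using li lj True by auto
          next
            case ne: False
            have AB: "A \<inter> B = {\<xi>}" using xi(2) Ai B K ne I_def by auto
            have "rpos cyc p0 i \<in> A - B" "rpos cyc p0 j \<in> B - A" using AB Ai B False Fj by auto
            then have "odd (k+1)" using N5[rule_format, of A B p k] Ai(1) B(1) ne fp ends by simp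
            moreover have "f A \<noteq> f B" using inj_on_contraD[OF inj ne] Ai(1) B(1) K(1) by blast
            ultimately show ?thesis using li lj by auto
          qed
        qed
      qed
      moreover have "odd (j - i - 1) \<longleftrightarrow> even k" using k k_def by auto
      ultimately show ?thesis by simp
    qed
  qed
  then show ?thesis unfolding wx_def S_def lab_def n_def .
qed

lemma set_expand: "set u \<subseteq> set (expand u)"
proof (induction u rule: expand.induct)
  case (1 x y r)
  then show ?case by (cases "x = y \<and> (\<exists>c. x = Prop c)") (simp_all only: expand.simps if_True if_False, auto)
qed simp_all

lemma expand_hd: "u \<noteq> [] \<Longrightarrow> expand u \<noteq> [] \<and> expand u ! 0 = hd u"
proof (induction u rule: expand.induct)
  case (1 x y r)
  then show ?case by (cases "x = y \<and> (\<exists>c. x = Prop c)") (simp_all only: expand.simps if_True if_False, auto)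
qed simp_all

lemma ldist_hd: assumes "u \<noteq> []" "hd u = Prop b" "Prop a \<in> set u"
  "\<forall>c. Prop c \<in> set u \<and> c \<noteq> a \<longrightarrow> ldist (vword u) (Prop a) < ldist (vword u) (Prop c)"
  shows "a = b"
proof (rule ccontr)
  assume ab: "a \<noteq> b"
  define v where "v = vword u"
  define N where "N = length v"
  have eN: "N = length (expand u) + 5" unfolding N_def v_def vword_def by simp
  have ne: "expand u \<noteq> []" "expand u ! 0 = Prop b" using expand_hd[OF assms(1)] assms(2) by auto
  then have N6: "N \<ge> 6" using eN by (cases "expand u") auto
  have v3: "v ! 3 = Prop b" using ne unfolding v_def vword_def by (simp add: nth_append)
  define Sb where "Sb = {min i (N - i) | i. i < N \<and> v ! i = Prop b}"
  define Sa where "Sa = {min i (N - i) | i. i < N \<and> v ! i = Prop a}"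
  have fSb: "finite Sb" unfolding Sb_def
    by (rule finite_subset[of _ "(\<lambda>i. min i (N - i)) ` {..<N}"]) auto
  have fSa: "finite Sa" unfolding Sa_def
    by (rule finite_subset[of _ "(\<lambda>i. min i (N - i)) ` {..<N}"]) auto
  have "min 3 (N - 3) \<in> Sb" unfolding Sb_def using v3 N6 by (intro CollectI exI[of _ 3]) auto
  then have "ldist v (Prop b) \<le> 3" unfolding ldist_def Sb_def[symmetric] N_def[symmetric]
    using Min_le[OF fSb] by (meson min.boundedE order.trans)
  moreover have "ldist v (Prop a) < ldist v (Prop b)" using assms(4) assms(2) assms(1) ab v_def
    by (metis hd_in_set)
  ultimately have lt: "Min Sa < 3" unfolding ldist_def Sa_def N_def by simp
  have "Prop a \<in> set v" using assms(3) set_expand[of u] unfolding v_def vword_def by auto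
  then obtain i0 where "i0 < N" "v ! i0 = Prop a" unfolding N_def by (auto simp: in_set_conv_nth)
  then have "Sa \<noteq> {}" unfolding Sa_def by auto
  then have "Min Sa \<in> Sa" using Min_in fSa by auto
  then obtain i where i: "i < N" "v ! i = Prop a" "min i (N - i) < 3" using lt unfolding Sa_def by auto
  show False
  proof (cases "i < 3")
    case True
    then have "v ! i \<in> {Sig, Eps}" unfolding v_def vword_def
      by (auto simp: nth_append less_Suc_eq numeral_3_eq_3)
    then show False using i by auto
  next
    case False
    then have "N - i < 3" using i by auto
    then have "i = N - 1 \<or> i = N - 2" using i by auto
    then have "v ! i = Eps" using eN unfolding v_def vword_def
      by (auto simp: nth_append N_def v_def vword_def)
    then show False using i by simp
  qed
qed

lemma pat_rot: assumes "w1 \<noteq> []" "hd w1 = Sig" "w0 = rotate d w1" "hd w0 \<noteq> Eps"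
  shows "\<exists>m. pattern w0 = rotate m (pattern w1)"
proof -
  define d' where "d' = d mod length w1"
  define u1 where "u1 = take d' w1"
  define u2 where "u2 = drop d' w1"
  have w1: "w1 = u1 @ u2" unfolding u1_def u2_def by simp
  have w0: "w0 = u2 @ u1" using assms(3) unfolding u1_def u2_def d'_def by (simp add: rotate_drop_take)
  have d'l: "d' < length w1" using assms(1) d'_def by simp
  then have u2ne: "u2 \<noteq> []" unfolding u2_def by simp
  then have "hd u2 \<noteq> Eps" using w0 assms(4) by simp
  then have p2: "pattern u2 = [] \<or> hd (pattern u2) \<noteq> Eps" using u2ne
    by (cases u2) (auto simp: pattern_Cons_ne)
  have p1: "pattern u1 = [] \<or> hd (pattern u1) \<noteq> Eps"
  proof (cases u1)
    case (Cons y ys)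
    then have "y = Sig" using assms(2) w1 by simp
    then show ?thesis using Cons by (simp add: pattern_Cons_ne)
  qed simp
  have "pattern w1 = pattern u1 @ pattern u2" using w1 pattern_append[OF p2] by simp
  moreover have "pattern w0 = pattern u2 @ pattern u1" using w0 pattern_append[OF p1] by simp
  ultimately have "pattern w0 = rotate (length (pattern u1)) (pattern w1)" by (simp add: rotate_append)
  then show ?thesis by blast
qed

lemma rot_unique: assumes "Sig \<notin> set r" "hd (rotate j (Sig # r)) = Sig"
  shows "rotate j (Sig # r) = Sig # r"
proof -
  define m where "m = j mod length (Sig # r)"
  have r: "rotate j (Sig # r) = rotate m (Sig # r)" unfolding m_def by (metis rotate_conv_mod)
  show ?thesis
  proof (cases m)
    case 0 then show ?thesis using r by simp
  next
    case (Suc m')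
    have "m < length (Sig # r)" unfolding m_def by simp
    then have m'r: "m' < length r" using Suc by simp
    have "rotate m (Sig # r) = drop m (Sig # r) @ take m (Sig # r)" using \<open>m < length (Sig # r)\<close>
      by (simp add: rotate_drop_take)
    moreover have "drop m (Sig # r) = r ! m' # drop (Suc m') r" using Suc m'r by (simp add: Cons_nth_drop_Suc)
    ultimately have "hd (rotate j (Sig # r)) = r ! m'" using r by simp
    then show ?thesis using assms m'r nth_mem by fastforce
  qed
qed

lemma cyc_rel_rot: "cyc_rel v (rotate m w) \<Longrightarrow> \<exists>j. v = rotate j w \<or> v = rev (rotate j w)"
  unfolding cyc_rel_def by (auto simp: rotate_rotate)

lemma setP: "Prop x \<in> set (pattern w) \<longleftrightarrow> Prop x \<in> set w"
  using set_pattern[of w] by blast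

lemma setS: "Sig \<in> set (pattern w) \<longleftrightarrow> Sig \<in> set w"
  using set_pattern[of w] by blast

lemma cyc_rel_set: "cyc_rel v w \<Longrightarrow> set v = set w"
  unfolding cyc_rel_def by auto

lemma vlabel_notEps: assumes "v \<in> \<Union>(inscribed V E)" shows "vlabel V E f v \<noteq> Eps"
proof (cases "card {K \<in> inscribed V E. v \<in> K} \<ge> 2")
  case True
  then show ?thesis unfolding vlabel_def by (simp only: if_True) simp
next
  case False
  have "\<exists>K \<in> inscribed V E. v \<in> K" using assms by auto
  then show ?thesis using False unfolding vlabel_def by (simp only: if_True if_False) simp
qed

theorem lemma5:
  fixes W :: "'a letter list set" and a :: 'a
  assumes "sunword W"
    and "\<exists>w\<in>W. card {x. Prop x \<in> set w} \<ge> 2"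
    and "induced_least W a"
  shows "\<exists>xs ls. length xs = length ls \<and> length xs \<ge> 2 \<and> xs ! 0 = a \<and>
    (\<forall>h. Suc h < length xs \<longrightarrow> xs ! h \<noteq> xs ! Suc h) \<and>
    (\<forall>h < length ls. ls ! h > 0) \<and>
    block_word xs ls \<in> W \<and>
    odd (ls ! 0) \<and> odd (last ls) \<and>
    (\<forall>h. 0 < h \<and> Suc h < length xs \<longrightarrow> (odd (ls ! h) \<longleftrightarrow> xs ! (h - 1) \<noteq> xs ! Suc h))"
proof -
  obtain V E cyc and f :: "nat set \<Rightarrow> 'a" and r0 where
    sun: "sunoid V E" and ms: "multisun_with V E cyc" and inj: "inj_on f (inscribed V E)"
    and r0: "r0 < length cyc" "cyc ! r0 \<in> \<Union>(inscribed V E)"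
    and W: "W = cls (map (vlabel V E f) (rotate r0 cyc))"
    using assms(1) unfolding sunword_def by blast
  define I where "I = inscribed V E"
  define n where "n = length cyc"
  define lab where "lab = vlabel V E f"
  have sN0: "satisfies_N V E"
    and sN: "\<forall>D. D \<subseteq> inscribed V E \<and> D \<noteq> {} \<and> D \<noteq> inscribed V E \<longrightarrow> satisfies_N V (del_cliques E D)"
    using sun unfolding sunoid_def by auto
  have NC: "N_conditions V E cyc" using sN0 ms unfolding satisfies_N_def by blast
  note NC3 = NC[unfolded N_conditions_def Let_def, THEN conjunct2, THEN conjunct2, THEN conjunct1]
  obtain \<xi> where xi0: "\<xi> \<in> set cyc" "\<forall>A\<in>inscribed V E. \<xi> \<in> A"
     "\<forall>A\<in>inscribed V E. \<forall>B\<in>inscribed V E. A \<noteq> B \<longrightarrow> A \<inter> B = {\<xi>}"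
    using NC3 by (elim exE conjE) (rule that, assumption+)
  have xi: "\<xi> \<in> set cyc" "\<forall>A\<in>I. \<xi> \<in> A" "\<forall>A\<in>I. \<forall>B\<in>I. A \<noteq> B \<longrightarrow> A \<inter> B = {\<xi>}"
    using xi0 unfolding I_def by simp_all
  have sg: "simple_graph V E" and dcyc: "distinct cyc" and sc: "set cyc = V" and n3: "n \<ge> 3"
    using ms unfolding multisun_with_def n_def by auto
  have n0: "0 < n" using n3 by linarith
  have fV: "finite V" using sg simple_graph_def by auto
  have fI: "finite I" using fin_insc[OF fV] I_def by simp
  define w0 where "w0 = map lab (rotate r0 cyc)"
  have W0: "W = cls w0" using W w0_def lab_def by simp
  have setw0: "set w0 = lab ` V" using w0_def sc by simp
  have inW: "\<And>v. v \<in> W \<Longrightarrow> \<exists>m. pattern v = rotate m (pattern w0) \<or> pattern v = rev (rotate m (pattern w0))"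
    using W0 unfolding cls_def approx_def cyc_rel_def by auto
  obtain w where w: "w \<in> W" "card {x. Prop x \<in> set w} \<ge> 2" using assms(2) by auto
  have finS: "finite {x. Prop x \<in> set w}" using w(2) by (metis card.infinite not_numeral_le_zero)
  have "\<not> card {x. Prop x \<in> set w} \<le> Suc 0" using w(2) by simp
  then obtain x1 x2 where x12: "x1 \<noteq> x2" "Prop x1 \<in> set w" "Prop x2 \<in> set w"
    using card_le_Suc0_iff_eq[OF finS] by blast
  have wset: "\<And>x. Prop x \<in> set w \<Longrightarrow> Prop x \<in> set w0"
  proof -
    fix x assume "Prop x \<in> set w"
    then have "Prop x \<in> set (pattern w)" by (simp only: setP)
    from inW[OF w(1)] obtain m where "pattern w = rotate m (pattern w0) \<or> pattern w = rev (rotate m (pattern w0))"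
      by (elim exE)
    then have "set (pattern w) = set (pattern w0)" by (elim disjE) simp_all
    with \<open>Prop x \<in> set (pattern w)\<close> have "Prop x \<in> set (pattern w0)" by simp
    then show "Prop x \<in> set w0" by (simp only: setP)
  qed
  have x12w0: "Prop x1 \<in> set w0" "Prop x2 \<in> set w0" using wset x12 by auto
  have propK: "\<And>x. Prop x \<in> set w0 \<Longrightarrow> \<exists>K\<in>I. x = f K \<and> (\<exists>v\<in>K. lab v = Prop x)"
  proof -
    fix x assume "Prop x \<in> set w0"
    then obtain v where "v \<in> V" "lab v = Prop x" using setw0 by auto
    then show "\<exists>K\<in>I. x = f K \<and> (\<exists>v\<in>K. lab v = Prop x)"
      using vlabel_Prop[of V E f v x] fI unfolding I_def lab_def by blast
  qed
  obtain K1 where K1: "K1 \<in> I" "x1 = f K1" using propK[OF x12w0(1)] by blast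
  obtain K2 where K2: "K2 \<in> I" "x2 = f K2" using propK[OF x12w0(2)] by blast
  have K12: "K1 \<in> I" "K2 \<in> I" "K1 \<noteq> K2" using K1 K2 x12(1) by auto
  have labxi: "lab \<xi> = Sig" using vlabel_two[of V E K1 K2 \<xi> f] fI K12 xi(2) unfolding I_def lab_def by auto
  obtain p0 where p0: "p0 < n" "cyc ! p0 = \<xi>" using xi(1) unfolding n_def by (auto simp: in_set_conv_nth)
  define w1 where "w1 = map lab (rotate p0 cyc)"
  define t where "t = tl w1"
  have lw1: "length w1 = n" unfolding w1_def n_def by simp
  have w1n: "\<And>j. j < n \<Longrightarrow> w1 ! j = lab (rpos cyc p0 j)"
    unfolding w1_def rpos_def n_def by (simp add: nth_rotate add.commute)
  have w1t: "w1 = Sig # t" using w1n[of 0] n0 lw1 labxi p0 unfolding t_def rpos_def n_def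
    by (cases w1) auto
  have wx: "map (\<lambda>j. lab (rpos cyc p0 j)) [0..<Suc n] = Sig # t @ [Sig]"
  proof (rule nth_equalityI)
    show "length (map (\<lambda>j. lab (rpos cyc p0 j)) [0..<Suc n]) = length (Sig # t @ [Sig])"
      using lw1 w1t by (metis length_Cons length_append_singleton length_map length_upt minus_nat.diff_0)
  next
    fix j assume "j < length (map (\<lambda>j. lab (rpos cyc p0 j)) [0..<Suc n])"
    then have j: "j < Suc n" by simp
    show "map (\<lambda>j. lab (rpos cyc p0 j)) [0..<Suc n] ! j = (Sig # t @ [Sig]) ! j"
    proof (cases "j < n")
      case True
      have "(Sig # t @ [Sig]) ! j = w1 ! j" using w1t True lw1 by (simp add: nth_append nth_Cons split: nat.splits)
      then show ?thesis using w1n True j by (simp del: upt_Suc)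
    next
      case False
      then have "j = n" using j by simp
      moreover have "rpos cyc p0 n = \<xi>" using p0 unfolding rpos_def n_def by simp
      moreover have "length t = n - 1" using lw1 w1t by (metis diff_Suc_1 length_Cons)
      ultimately show ?thesis using labxi n0 by (simp add: nth_append del: upt_Suc)
    qed
  qed
  define L where "L = f ` I"
  have foldT: "\<forall>S. S \<noteq> {} \<and> S \<subseteq> L \<longrightarrow> snd (snd (foldl (stp S) (Sig,False,True) (pattern t @ [Sig])))"
  proof (intro allI impI)
    fix S assume S: "S \<noteq> {} \<and> S \<subseteq> L"
    define Ks where "Ks = {K \<in> I. f K \<in> S}"
    have fKs: "f ` Ks = S" using S unfolding Ks_def L_def by auto
    have Ks: "Ks \<subseteq> inscribed V E" "Ks \<noteq> {}" using S fKs unfolding Ks_def I_def by auto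
    have "pc (f ` Ks) (map (\<lambda>j. vlabel V E f (rpos cyc p0 j)) [0..<Suc (length cyc)])"
      by (rule gp[OF ms sN sN0 xi(2)[unfolded I_def] xi(3)[unfolded I_def] inj K12(1)[unfolded I_def] K12(2)[unfolded I_def] K12(3) p0(1)[unfolded n_def] p0(2) Ks])
    then have "pc S (Sig # t @ [Sig])" using wx fKs unfolding lab_def n_def by simp
    then have "snd (snd (foldl (stp S) (Sig,False,True) (t @ [Sig])))" using fold_kept[of S Sig "t @ [Sig]"] by simp
    then show "snd (snd (foldl (stp S) (Sig,False,True) (pattern t @ [Sig])))" by (simp add: fold_pattern)
  qed
  define r where "r = pattern t"
  have P: "pattern w1 = Sig # r" unfolding r_def w1t by (simp add: pattern_Cons_ne)
  have rotw0: "\<exists>m. pattern w0 = rotate m (Sig # r)"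
  proof -
    have "rotate r0 cyc = rotate (r0 + n - p0) (rotate p0 cyc)"
      using p0 by (simp add: rotate_rotate) (metis n_def rotate_conv_mod mod_add_self2 rotate_conv_mod)
    then have "w0 = rotate (r0 + n - p0) w1" unfolding w0_def w1_def by (simp add: rotate_map)
    moreover have "hd w0 \<noteq> Eps"
    proof -
      have l0: "0 < length cyc" using r0 by linarith
      have "rotate r0 cyc ! 0 = cyc ! ((r0 + 0) mod length cyc)" using nth_rotate[OF l0] by blast
      then have "rotate r0 cyc ! 0 = cyc ! r0" using r0 by simp
      then have "w0 ! 0 = lab (cyc ! r0)" using l0 unfolding w0_def by simp
      moreover have "w0 \<noteq> []" using r0 unfolding w0_def by auto
      ultimately show ?thesis using vlabel_notEps[OF r0(2)] unfolding lab_def by (simp add: hd_conv_nth)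
    qed
    ultimately show ?thesis using pat_rot[of w1 w0] P w1t by auto
  qed
  have lt: "length t = n - 1" using lw1 unfolding w1t by simp
  have tn: "\<And>i. i < length t \<Longrightarrow> t ! i = lab (rpos cyc p0 (Suc i))"
  proof -
    fix i assume i: "i < length t"
    have "t ! i = w1 ! Suc i" unfolding w1t by simp
    moreover have "Suc i < n" using i lt by linarith
    ultimately show "t ! i = lab (rpos cyc p0 (Suc i))" using w1n by simp
  qed
  have Sigr: "Sig \<notin> set r"
  proof
    assume "Sig \<in> set r"
    then have "Sig \<in> set t" unfolding r_def by (simp only: setS)
    then obtain i where i: "i < length t" "t ! i = Sig" by (auto simp: in_set_conv_nth)
    then have i': "Suc i < n" using lt by linarith
    define v where "v = rpos cyc p0 (Suc i)"
    have "lab v = Sig" using tn i v_def by simp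
    then have c: "card {K \<in> I. v \<in> K} \<ge> 2" using vlabel_Sig[of V E f v] unfolding lab_def I_def by simp
    have fin: "finite {K \<in> I. v \<in> K}" using fI by simp
    have "\<not> card {K \<in> I. v \<in> K} \<le> Suc 0" using c by simp
    then obtain A B where AB: "A \<in> {K \<in> I. v \<in> K}" "B \<in> {K \<in> I. v \<in> K}" "A \<noteq> B"
      using card_le_Suc0_iff_eq[OF fin] by blast
    have "A \<inter> B = {\<xi>}" using xi(3) AB by simp
    moreover have "v \<in> A \<inter> B" using AB by simp
    ultimately have "v = \<xi>" by simp
    then have "Suc i = 0 \<or> Suc i = n" using rpos_xi[OF dcyc p0(1)[unfolded n_def], of "Suc i"] p0 i' n_def v_def by simp
    then show False using i' by simp
  qed
  have setw1: "set w1 = lab ` V" unfolding w1_def using sc by simp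
  have rL: "\<forall>y. Prop y \<in> set r \<longrightarrow> y \<in> L"
  proof (intro allI impI)
    fix y assume "Prop y \<in> set r"
    then have "Prop y \<in> set t" unfolding r_def by (simp only: setP)
    then have "Prop y \<in> set w1" unfolding w1t by simp
    then have "Prop y \<in> set w0" using setw0 setw1 by simp
    then obtain K where "K \<in> I" "y = f K" using propK by blast
    then show "y \<in> L" unfolding L_def by simp
  qed
  have x12r: "Prop x1 \<in> set r" "Prop x2 \<in> set r"
  proof -
    have "Prop x1 \<in> set w1" "Prop x2 \<in> set w1" using x12w0 setw0 setw1 by simp_all
    then have "Prop x1 \<in> set t" "Prop x2 \<in> set t" unfolding w1t by simp_all
    then show "Prop x1 \<in> set r" "Prop x2 \<in> set r" unfolding r_def by (simp_all only: setP)
  qed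
  obtain u where u: "Sig # u \<in> W" "pattern (Sig # u) = Sig # u" "Prop a \<in> set u"
    "\<forall>b. Prop b \<in> set u \<and> b \<noteq> a \<longrightarrow> ldist (vword u) (Prop a) < ldist (vword u) (Prop b)"
    using assms(3) unfolding induced_least_def by blast
  obtain m where m: "pattern w0 = rotate m (Sig # r)" using rotw0 by blast
  have "cyc_rel (Sig # u) (rotate m (Sig # r))"
    using u(1,2) m W0 unfolding cls_def approx_def by simp
  then obtain j where j: "Sig # u = rotate j (Sig # r) \<or> Sig # u = rev (rotate j (Sig # r))"
    using cyc_rel_rot by blast
  have ur: "u = r \<or> u = rev r"
  proof (cases "Sig # u = rotate j (Sig # r)")
    case True
    then have "rotate j (Sig # r) = Sig # r" using rot_unique[OF Sigr] by (metis list.sel(1))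
    then show ?thesis using True by simp
  next
    case False
    then have e: "rotate j (Sig # r) = rev u @ [Sig]" using j by (metis rev.simps(2) rev_rev_ident)
    have "rotate (length u) (rotate j (Sig # r)) = Sig # rev u" unfolding e
      using rotate_append[of "rev u" "[Sig]"] by simp
    then have "rotate (length u + j) (Sig # r) = Sig # rev u" by (simp add: rotate_rotate)
    then have "Sig # rev u = Sig # r" using rot_unique[OF Sigr, of "length u + j"] by simp
    then show ?thesis by auto
  qed
  have setu: "set u = set r" using ur by auto
  have noeeu: "noee u" using noee_pattern[of "Sig # u"] u(2) by (simp add: noee_Cons)
  have foldu: "\<forall>S. S \<noteq> {} \<and> S \<subseteq> L \<longrightarrow> snd (snd (foldl (stp S) (Sig,False,True) (u @ [Sig])))"
  proof (intro allI impI)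
    fix S assume S: "S \<noteq> {} \<and> S \<subseteq> L"
    have o: "snd (snd (foldl (stp S) (Sig,False,True) (r @ [Sig])))" using foldT S r_def by simp
    show "snd (snd (foldl (stp S) (Sig,False,True) (u @ [Sig])))"
    proof (cases "u = r")
      case True then show ?thesis using o by simp
    next
      case False
      then have ue: "u = rev r" using ur by simp
      have "pc S (Sig # r @ [Sig])" using o fold_kept[of S Sig "r @ [Sig]"] by simp
      then have "pc S (rev (Sig # r @ [Sig]))" using pc_rev by blast
      then have "pc S (Sig # u @ [Sig])" using ue by simp
      then show ?thesis using fold_kept[of S Sig "u @ [Sig]"] by simp
    qed
  qed
  obtain xs ls where c: "length xs = length ls" "length xs \<ge> 2" "Prop (xs!0) = hd u"
    "\<forall>h. Suc h < length xs \<longrightarrow> xs ! h \<noteq> xs ! Suc h" "\<forall>h < length ls. ls ! h > 0"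
    "block_word xs ls = Sig # u" "odd (ls ! 0)" "odd (last ls)"
    "\<forall>h. 0 < h \<and> Suc h < length xs \<longrightarrow> (odd (ls ! h) \<longleftrightarrow> xs ! (h - 1) \<noteq> xs ! Suc h)"
    using core[OF noeeu _ _ foldu x12(1)] Sigr rL x12r setu by auto
  have "u \<noteq> []" using x12r setu by auto
  then have "a = xs ! 0" using ldist_hd[of u "xs!0" a] c(3) u(3,4) by auto
  then show ?thesis using c u(1) by (intro exI[of _ xs] exI[of _ ls]) auto
qed

end
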